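(* There exists a homeomorphism $T\colon X\to X$ of a Cantor set $X$ which is transitive, not minimal, and has no periodic points, and which is conjugate to a homeomorphism $f\colon K\to K$ of a Cantor set $K\subseteq\mathbb{R}$ satisfying $f'(x)=0$ for every $x\in K$.
   Context: A Cantor set is a compact metric space that is totally disconnected and has no isolated points. $(X,T)$ is minimal if $X$ has no nonempty proper closed subset $A$ with $T(A)=A$; transitive if for all nonempty open $U,V\subseteq X$ there is $n\in\mathbb{N}$ with $T^n(U)\cap V\neq\emptyset$. A periodic point is $x$ with $T^n(x)=x$ for some $n\geq1$. Conjugacy means there is a homeomorphism $h\colon X\to K$ with $h\circ T=f\circ h$. For $K\subseteq\mathbb{R}$ perfect, $f'(x)=\lim_{y\to x,\,y\in K\setminus\{x\}}\frac{f(y)-f(x)}{y-x}$. *)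

theory Defs
  imports "HOL-Analysis.Analysis"
begin

definition totally_disconnected :: "'a::topological_space set \<Rightarrow> bool" where
  "totally_disconnected S \<longleftrightarrow> (\<forall>C. C \<subseteq> S \<and> connected C \<longrightarrow> (\<exists>a. C \<subseteq> {a}))"

definition cantor_set :: "'a::metric_space set \<Rightarrow> bool" where
  "cantor_set S \<longleftrightarrow> S \<noteq> {} \<and> compact S \<and> totally_disconnected S \<and> (\<forall>x\<in>S. x islimpt S)"

definition is_homeo_of :: "'a::topological_space set \<Rightarrow> ('a \<Rightarrow> 'a) \<Rightarrow> bool" where
  "is_homeo_of X T \<longleftrightarrow> (\<exists>g. homeomorphism X X T g)"

definition dyn_minimal :: "'a::topological_space set \<Rightarrow> ('a \<Rightarrow> 'a) \<Rightarrow> bool" where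
  "dyn_minimal X T \<longleftrightarrow>
     \<not> (\<exists>A. A \<noteq> {} \<and> A \<subset> X \<and> closedin (top_of_set X) A \<and> T ` A = A)"

definition dyn_transitive :: "'a::topological_space set \<Rightarrow> ('a \<Rightarrow> 'a) \<Rightarrow> bool" where
  "dyn_transitive X T \<longleftrightarrow>
     (\<forall>U V. openin (top_of_set X) U \<and> U \<noteq> {} \<and> openin (top_of_set X) V \<and> V \<noteq> {}
        \<longrightarrow> (\<exists>n::nat. n \<ge> 1 \<and> (T ^^ n) ` U \<inter> V \<noteq> {}))"

definition periodic_point :: "'a set \<Rightarrow> ('a \<Rightarrow> 'a) \<Rightarrow> 'a \<Rightarrow> bool" where
  "periodic_point X T x \<longleftrightarrow> x \<in> X \<and> (\<exists>n::nat. n \<ge> 1 \<and> (T ^^ n) x = x)"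

definition conjugate ::
  "'a::topological_space set \<Rightarrow> ('a \<Rightarrow> 'a) \<Rightarrow> 'b::topological_space set \<Rightarrow> ('b \<Rightarrow> 'b) \<Rightarrow> bool" where
  "conjugate X T K f \<longleftrightarrow>
     (\<exists>h h'. homeomorphism X K h h' \<and> (\<forall>x\<in>X. h (T x) = f (h x)))"

definition rel_deriv_is :: "(real \<Rightarrow> real) \<Rightarrow> real set \<Rightarrow> real \<Rightarrow> real \<Rightarrow> bool" where
  "rel_deriv_is f K x d \<longleftrightarrow> ((\<lambda>y. (f y - f x) / (y - x)) \<longlongrightarrow> d) (at x within K)"

end

theory Submission imports Defs "HOL-Library.Discrete_Functions"
begin

definition valid :: "(nat \<Rightarrow> nat) \<Rightarrow> bool" where
  "valid x \<longleftrightarrow> (\<forall>i. x i \<le> 5 \<and> (2 \<le> x i \<longleftrightarrow> 4 \<le> x (Suc i)))"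

primrec R :: "(nat \<Rightarrow> nat) \<Rightarrow> nat \<Rightarrow> nat" where
  "R x 0 = 0"
| "R x (Suc n) = (if x n = 0 \<or> x n = 2 then R x n
     else if x n = 1 \<or> x n = 4 then 2^n + R x n
     else if x n = 5 then 2^n + (n+1)*2^n + R x n
     else 2^n + 2*((n+1)*2^n) + R x n)"

definition Nv :: "(nat \<Rightarrow> nat) \<Rightarrow> nat \<Rightarrow> nat" where
  "Nv x n = (if 4 \<le> x n then (n+1)*2^n else 2^n)"

lemma validD: "valid x \<Longrightarrow> x i \<le> 5" "valid x \<Longrightarrow> (2 \<le> x i \<longleftrightarrow> 4 \<le> x (Suc i))"
  by (auto simp: valid_def)

lemma lab_cases: "(l::nat) \<le> 5 \<Longrightarrow> l = 0 \<or> l = 1 \<or> l = 2 \<or> l = 3 \<or> l = 4 \<or> l = 5"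
  by auto

lemma R_bound: "valid x \<Longrightarrow> R x n < Nv x n"
proof (induction n)
  case 0 then show ?case by (simp add: Nv_def)
next
  case (Suc n)
  have v: "x n \<le> 5" "2 \<le> x n \<longleftrightarrow> 4 \<le> x (Suc n)" using validD[OF Suc.prems] by auto
  have IH: "R x n < Nv x n" using Suc by auto
  define P where "P = (2::nat)^n"
  have P: "2^Suc n = 2*P" unfolding P_def by simp
  from lab_cases[OF v(1)] show ?case
  proof (elim disjE)
    assume h: "x n = 0" then show ?thesis using IH v by (auto simp: Nv_def P P_def[symmetric])
  next
    assume h: "x n = 1" then show ?thesis using IH v by (auto simp: Nv_def P P_def[symmetric])
  next
    assume h: "x n = 2" then show ?thesis using IH v by (auto simp: Nv_def P P_def[symmetric])
  next
    assume h: "x n = 3" then show ?thesis using IH v by (auto simp: Nv_def P P_def[symmetric] algebra_simps)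
  next
    assume h: "x n = 4" then show ?thesis using IH v by (auto simp: Nv_def P P_def[symmetric] algebra_simps)
  next
    assume h: "x n = 5" then show ?thesis using IH v by (auto simp: Nv_def P P_def[symmetric] algebra_simps)
  qed
qed
lemma R_prefix: "(\<forall>i<n. x i = y i) \<Longrightarrow> R x n = R y n"
  by (induction n) auto

lemma R_mono_Suc: "R x n \<le> R x (Suc n)"
  by auto

definition ab :: "nat \<Rightarrow> nat" where "ab k = floor_log k - 1"
definition wt :: "nat \<Rightarrow> nat \<Rightarrow> nat" where "wt k r = 1 + (r + 2^ab k) mod 2^k"
definition Fa :: "(nat \<Rightarrow> nat) \<Rightarrow> nat \<Rightarrow> nat" where "Fa x n = (\<Sum>k\<in>{1..n}. wt k (R x k))"
definition Phi :: "(nat \<Rightarrow> nat) \<Rightarrow> nat \<Rightarrow> nat" where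
  "Phi x n = (if n = 0 then 0 else if 2 \<le> x (n-1) then 2^(n+1) + n * R x n else Fa x n)"
definition Bd :: "nat \<Rightarrow> nat" where "Bd n = 2^(n+1) + n*((n+1)*2^n)"

lemma floor_log_lt: "floor_log k < k \<or> k = 0"
proof (cases "k = 0")
  case False
  have "2 ^ floor_log k \<le> k" using False floor_log_exp2_le by auto
  moreover have "floor_log k < 2 ^ floor_log k" by (rule less_exp)
  ultimately show ?thesis by linarith
qed auto

lemma ab_lt: "1 \<le> k \<Longrightarrow> ab k < k"
  using floor_log_lt[of k] by (auto simp: ab_def)

lemma wt_le: "1 \<le> k \<Longrightarrow> wt k r \<le> 2^k"
proof -
  have "(r + 2^ab k) mod 2^k < 2^k" by simp
  then show ?thesis unfolding wt_def by linarith
qed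

lemma wt_ge: "1 \<le> wt k r" by (simp add: wt_def)

lemma Fa_Suc: "Fa x (Suc n) = Fa x n + wt (Suc n) (R x (Suc n))"
  unfolding Fa_def by (simp add: atLeastAtMostSuc_conv add.commute)

lemma Fa_bound: "Fa x n + 2 \<le> 2^(n+1)"
proof (induction n)
  case 0 then show ?case by (simp add: Fa_def)
next
  case (Suc n)
  have "wt (Suc n) (R x (Suc n)) \<le> 2^Suc n" by (rule wt_le) simp
  then show ?case using Suc by (simp add: Fa_Suc)
qed

lemma Fa_prefix: "(\<forall>i<n. x i = y i) \<Longrightarrow> Fa x n = Fa y n"
  unfolding Fa_def
  by (rule sum.cong) (auto intro!: arg_cong[where f="wt _"] R_prefix)

lemma Phi_prefix: "(\<forall>i<n. x i = y i) \<Longrightarrow> Phi x n = Phi y n"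
  unfolding Phi_def using R_prefix[of n x y] Fa_prefix[of n x y]
  by (cases n) auto

lemma Phi_step: "valid x \<Longrightarrow> Phi x n + 1 \<le> Phi x (Suc n)"
proof (cases n)
  case 0
  assume "valid x"
  have "Phi x 1 = wt 1 (R x 1) \<or> Phi x 1 = 2^2 + R x 1" by (simp add: Phi_def Fa_def)
  then show ?thesis using 0 wt_ge[of 1 "R x 1"] by (auto simp: Phi_def)
next
  case (Suc m)
  assume v: "valid x"
  have e: "2 \<le> x m \<longleftrightarrow> 4 \<le> x (Suc m)" using validD[OF v] by auto
  have Rm: "R x (Suc m) \<le> R x (Suc (Suc m))" by (rule R_mono_Suc)
  have fb: "Fa x (Suc m) + 2 \<le> 2^(Suc m+1)" by (rule Fa_bound)
  show ?thesis
  proof (cases "2 \<le> x m")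
    case True
    then have "2 \<le> x (Suc m)" using e by auto
    moreover have "(Suc m) * R x (Suc m) \<le> (Suc (Suc m)) * R x (Suc (Suc m))"
      using Rm by (intro mult_mono) auto
    moreover have "Phi x (Suc m) = 2^(Suc m + 1) + Suc m * R x (Suc m)"
      using True by (simp add: Phi_def del: R.simps)
    moreover have "Phi x (Suc (Suc m)) = 2^(Suc (Suc m) + 1) + Suc (Suc m) * R x (Suc (Suc m))"
      using \<open>2 \<le> x (Suc m)\<close> by (simp add: Phi_def del: R.simps)
    moreover have "2^(Suc m + 1) + 1 \<le> (2::nat)^(Suc (Suc m) + 1)" by simp
    ultimately show ?thesis unfolding Suc by linarith
  next
    case False
    show ?thesis
    proof (cases "2 \<le> x (Suc m)")
      case True
      then show ?thesis using Suc False fb by (simp add: Phi_def del: R.simps)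
    next
      case F2: False
      then show ?thesis using Suc False wt_ge[of "Suc (Suc m)"] by (simp add: Phi_def Fa_Suc del: R.simps)
    qed
  qed
qed

lemma Phi_mono: "valid x \<Longrightarrow> m \<le> n \<Longrightarrow> Phi x m + (n - m) \<le> Phi x n"
proof (induction n)
  case 0 then show ?case by simp
next
  case (Suc n)
  show ?case
  proof (cases "m \<le> n")
    case True
    then show ?thesis using Suc Phi_step[OF Suc.prems(1), of n] by simp
  next
    case False
    then have "m = Suc n" using Suc by simp
    then show ?thesis by simp
  qed
qed

lemma Phi_ge: "valid x \<Longrightarrow> n \<le> Phi x n"
  using Phi_mono[of x 0 n] by (simp add: Phi_def)

lemma Phi_mono': "valid x \<Longrightarrow> m \<le> n \<Longrightarrow> Phi x m \<le> Phi x n"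
  using Phi_mono by fastforce

lemma Phi_ub: "valid x \<Longrightarrow> Phi x n \<le> Bd n"
proof (cases n)
  case 0 then show ?thesis by (simp add: Phi_def)
next
  case (Suc m)
  assume v: "valid x"
  show ?thesis
  proof (cases "2 \<le> x (n-1)")
    case True
    then have "4 \<le> x n" using validD[OF v, of m] Suc by auto
    then have "R x n < (n + 1) * 2^n" using R_bound[OF v, of n] by (simp add: Nv_def)
    then have "n * R x n \<le> n * ((n + 1) * 2^n)" by simp
    moreover have "Phi x n = 2^(n+1) + n * R x n" using Suc True by (simp add: Phi_def)
    ultimately show ?thesis unfolding Bd_def by linarith
  next
    case False
    then have "Phi x n = Fa x n" using Suc by (simp add: Phi_def)
    then show ?thesis using Fa_bound[of x n] unfolding Bd_def by linarith
  qed
qed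

lemma Bd_mono: "m \<le> n \<Longrightarrow> Bd m \<le> Bd n"
  unfolding Bd_def by (intro add_mono mult_mono power_increasing) auto


definition hh :: "(nat \<Rightarrow> nat) \<Rightarrow> nat \<Rightarrow> real" where "hh x n = (1/16) ^ Phi x n"
definition tm :: "(nat \<Rightarrow> nat) \<Rightarrow> nat \<Rightarrow> real" where "tm x n = real (x n) * hh x n"
definition ee :: "(nat \<Rightarrow> nat) \<Rightarrow> real" where "ee x = (\<Sum>n. tm x n)"
definition TT :: "(nat \<Rightarrow> nat) \<Rightarrow> nat \<Rightarrow> real" where "TT x m = (\<Sum>i. tm x (i + m))"

lemma hh_pos: "0 < hh x n" by (simp add: hh_def)

lemma hh_shift: "valid x \<Longrightarrow> hh x (n + i) \<le> hh x n * (1/16)^i"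
proof -
  assume v: "valid x"
  have "Phi x n + i \<le> Phi x (n + i)" using Phi_mono[OF v, of n "n+i"] by simp
  then have "(1/16::real) ^ Phi x (n + i) \<le> (1/16) ^ (Phi x n + i)"
    by (intro power_decreasing) auto
  then show ?thesis by (simp add: hh_def power_add)
qed

lemma hh_Suc: "valid x \<Longrightarrow> hh x (Suc n) \<le> hh x n / 16"
  using hh_shift[of x n 1] by simp

lemma hh_prefix: "(\<forall>i<n. x i = y i) \<Longrightarrow> hh x n = hh y n"
  using Phi_prefix[of n x y] by (simp add: hh_def)

lemma tm_nonneg: "0 \<le> tm x n" by (simp add: tm_def hh_def)

lemma tm_le: "valid x \<Longrightarrow> tm x (i + m) \<le> 5 * hh x m * (1/16)^i"
proof -
  assume v: "valid x"
  have "real (x (i+m)) \<le> 5" using validD(1)[OF v, of "i+m"] by simp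
  moreover have "hh x (i + m) \<le> hh x m * (1/16)^i" using hh_shift[OF v, of m i] by (simp add: add.commute)
  ultimately have "real (x (i+m)) * hh x (i + m) \<le> 5 * (hh x m * (1/16)^i)"
    by (intro mult_mono) (auto simp: hh_pos less_imp_le)
  then show ?thesis by (simp add: tm_def)
qed

lemma geo16: "summable (\<lambda>i. c * (1/16::real)^i)" "(\<Sum>i. c * (1/16::real)^i) = c * 16/15"
proof -
  show "summable (\<lambda>i. c * (1/16::real)^i)" by (intro summable_mult summable_geometric) simp
  have "(\<Sum>i. (1/16::real)^i) = 1 / (1 - 1/16)" by (rule suminf_geometric) simp
  then show "(\<Sum>i. c * (1/16::real)^i) = c * 16/15"
    by (subst suminf_mult) (auto intro: summable_geometric)
qed

lemma tm_summable_shift: "valid x \<Longrightarrow> summable (\<lambda>i. tm x (i + m))"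
  by (rule summable_comparison_test'[OF geo16(1)[of "5 * hh x m"], of 0])
     (use tm_le tm_nonneg in auto)

lemma tm_summable: "valid x \<Longrightarrow> summable (tm x)"
  using tm_summable_shift[of x 0] by simp

lemma TT_bounds: "valid x \<Longrightarrow> 0 \<le> TT x m \<and> TT x m \<le> 16/3 * hh x m"
proof -
  assume v: "valid x"
  have "TT x m \<le> (\<Sum>i. 5 * hh x m * (1/16)^i)"
    unfolding TT_def
    by (rule suminf_le) (use tm_le[OF v] tm_summable_shift[OF v] geo16(1) in auto)
  also have "\<dots> = 16/3 * hh x m" by (simp add: geo16(2))
  finally have "TT x m \<le> 16/3 * hh x m" .
  moreover have "0 \<le> TT x m" unfolding TT_def
    by (rule suminf_nonneg) (use tm_summable_shift[OF v] tm_nonneg in auto)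
  ultimately show ?thesis by simp
qed

lemma ee_split: "valid x \<Longrightarrow> ee x = (\<Sum>i<m. tm x i) + TT x m"
  unfolding ee_def TT_def using suminf_split_initial_segment[OF tm_summable, of x m] by simp

lemma TT_Suc: "valid x \<Longrightarrow> TT x m = tm x m + TT x (Suc m)"
  using ee_split[of x m] ee_split[of x "Suc m"] by simp

lemma tm_prefix: "(\<forall>i<n. x i = y i) \<Longrightarrow> i < n \<Longrightarrow> tm x i = tm y i"
  unfolding tm_def using hh_prefix[of i x y] by auto

lemma ee_upper: "valid x \<Longrightarrow> valid y \<Longrightarrow> (\<forall>i<m. x i = y i) \<Longrightarrow> \<bar>ee x - ee y\<bar> \<le> 16/3 * hh x m"
proof -
  assume v: "valid x" "valid y" and p: "\<forall>i<m. x i = y i"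
  have "(\<Sum>i<m. tm x i) = (\<Sum>i<m. tm y i)" by (rule sum.cong) (use tm_prefix[OF p] in auto)
  moreover have "hh y m = hh x m" using hh_prefix[OF p] by simp
  ultimately have "ee x - ee y = TT x m - TT y m" "hh y m = hh x m"
    using ee_split[OF v(1), of m] ee_split[OF v(2), of m] by auto
  then show ?thesis using TT_bounds[OF v(1), of m] TT_bounds[OF v(2), of m]
    unfolding abs_le_iff by linarith
qed

lemma ee_lower: "valid x \<Longrightarrow> valid y \<Longrightarrow> (\<forall>i<m. x i = y i) \<Longrightarrow> x m \<noteq> y m \<Longrightarrow> 2/3 * hh x m \<le> \<bar>ee x - ee y\<bar>"
proof -
  assume v: "valid x" "valid y" and p: "\<forall>i<m. x i = y i" and d: "x m \<noteq> y m"
  have s: "(\<Sum>i<m. tm x i) = (\<Sum>i<m. tm y i)" by (rule sum.cong) (use tm_prefix[OF p] in auto)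
  have h: "hh y m = hh x m" using hh_prefix[OF p] by simp
  have ex: "ee x = (\<Sum>i<m. tm x i) + tm x m + TT x (Suc m)" using ee_split[OF v(1), of m] TT_Suc[OF v(1), of m] by simp
  have ey: "ee y = (\<Sum>i<m. tm y i) + tm y m + TT y (Suc m)" using ee_split[OF v(2), of m] TT_Suc[OF v(2), of m] by simp
  have "1 \<le> \<bar>real (x m) - real (y m)\<bar>" using d by linarith
  then have a: "hh x m \<le> \<bar>tm x m - tm y m\<bar>"
    using h hh_pos[of x m] by (simp add: tm_def abs_mult flip: left_diff_distrib)
  have b1: "0 \<le> TT x (Suc m) \<and> TT x (Suc m) \<le> 16/3 * (hh x m / 16)"
    using TT_bounds[OF v(1), of "Suc m"] hh_Suc[OF v(1), of m] by auto
  have b2: "0 \<le> TT y (Suc m) \<and> TT y (Suc m) \<le> 16/3 * (hh x m / 16)"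
    using TT_bounds[OF v(2), of "Suc m"] hh_Suc[OF v(2), of m] h by auto
  show ?thesis using ex ey s a b1 b2 by (simp add: abs_le_iff abs_if split: if_splits) linarith?
qed


lemma ee_inj: "valid x \<Longrightarrow> valid y \<Longrightarrow> ee x = ee y \<Longrightarrow> x = y"
proof (rule ccontr)
  assume v: "valid x" "valid y" and e: "ee x = ee y" and ne: "x \<noteq> y"
  then obtain j where "x j \<noteq> y j" by auto
  define m where "m = (LEAST j. x j \<noteq> y j)"
  have m1: "x m \<noteq> y m" unfolding m_def by (rule LeastI) fact
  have m2: "\<forall>i<m. x i = y i" unfolding m_def using not_less_Least by blast
  show False using ee_lower[OF v m2 m1] e hh_pos[of x m] by simp
qed

definition nm :: "nat \<Rightarrow> bool" where "nm l \<longleftrightarrow> l \<noteq> 1 \<and> l \<noteq> 3"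
definition nn :: "nat \<Rightarrow> bool" where "nn l \<longleftrightarrow> l \<noteq> 0 \<and> l \<noteq> 2"
definition sc :: "nat \<Rightarrow> nat" where
  "sc l = (if l = 0 then 1 else if l = 2 then 4 else if l = 4 then 5 else if l = 5 then 3 else l)"
definition pc :: "nat \<Rightarrow> nat" where
  "pc l = (if l = 1 then 0 else if l = 4 then 2 else if l = 5 then 4 else if l = 3 then 5 else l)"

definition Vk :: "(nat \<Rightarrow> nat) \<Rightarrow> nat \<Rightarrow> nat \<Rightarrow> nat" where
  "Vk x k = (\<lambda>i. if i < k then (if 4 \<le> sc (x k) \<and> Suc i = k then 2 else 0)
               else if i = k then sc (x k) else x i)"
definition Wk :: "(nat \<Rightarrow> nat) \<Rightarrow> nat \<Rightarrow> nat \<Rightarrow> nat" where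
  "Wk x k = (\<lambda>i. if i < k then (if 4 \<le> pc (x k) \<and> Suc i = k then 3 else 1)
               else if i = k then pc (x k) else x i)"

definition V :: "(nat \<Rightarrow> nat) \<Rightarrow> nat \<Rightarrow> nat" where
  "V x = (if \<exists>k. nm (x k) then Vk x (LEAST k. nm (x k)) else (\<lambda>i. 0))"
definition W :: "(nat \<Rightarrow> nat) \<Rightarrow> nat \<Rightarrow> nat" where
  "W x = (if \<exists>k. nn (x k) then Wk x (LEAST k. nn (x k)) else (\<lambda>i. 1))"

lemma V_eq: "nm (x k) \<Longrightarrow> \<forall>i<k. \<not> nm (x i) \<Longrightarrow> V x = Vk x k"
proof -
  assume a: "nm (x k)" "\<forall>i<k. \<not> nm (x i)"
  have "(LEAST k. nm (x k)) = k" by (rule Least_equality) (use a in \<open>auto simp: not_less[symmetric]\<close>)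
  then show ?thesis using a unfolding V_def by auto
qed

lemma W_eq: "nn (x k) \<Longrightarrow> \<forall>i<k. \<not> nn (x i) \<Longrightarrow> W x = Wk x k"
proof -
  assume a: "nn (x k)" "\<forall>i<k. \<not> nn (x i)"
  have "(LEAST k. nn (x k)) = k" by (rule Least_equality) (use a in \<open>auto simp: not_less[symmetric]\<close>)
  then show ?thesis using a unfolding W_def by auto
qed

lemma first_nm: "\<exists>k. nm ((x::nat\<Rightarrow>nat) k) \<Longrightarrow> \<exists>k. nm (x k) \<and> (\<forall>i<k. \<not> nm (x i))"
  using exists_least_iff[of "\<lambda>k. nm (x k)"] by blast
lemma first_nn: "\<exists>k. nn ((x::nat\<Rightarrow>nat) k) \<Longrightarrow> \<exists>k. nn (x k) \<and> (\<forall>i<k. \<not> nn (x i))"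
  using exists_least_iff[of "\<lambda>k. nn (x k)"] by blast

lemma maxpath: "valid x \<Longrightarrow> \<forall>i<k. \<not> nm (x i) \<Longrightarrow> i < k \<Longrightarrow> x i = (if 4 \<le> x k \<and> Suc i = k then 3 else 1)"
proof -
  assume v: "valid x" and a: "\<forall>i<k. \<not> nm (x i)" and i: "i < k"
  have xi: "x i = 1 \<or> x i = 3" using a i by (auto simp: nm_def)
  have t: "2 \<le> x i \<longleftrightarrow> 4 \<le> x (Suc i)" using validD[OF v] by auto
  show ?thesis
  proof (cases "Suc i = k")
    case True then show ?thesis using xi t by auto
  next
    case False
    then have "Suc i < k" using i by simp
    then have "x (Suc i) = 1 \<or> x (Suc i) = 3" using a by (auto simp: nm_def)
    then show ?thesis using xi t False by auto
  qed
qed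

lemma minpath: "valid x \<Longrightarrow> \<forall>i<k. \<not> nn (x i) \<Longrightarrow> i < k \<Longrightarrow> x i = (if 4 \<le> x k \<and> Suc i = k then 2 else 0)"
proof -
  assume v: "valid x" and a: "\<forall>i<k. \<not> nn (x i)" and i: "i < k"
  have xi: "x i = 0 \<or> x i = 2" using a i by (auto simp: nn_def)
  have t: "2 \<le> x i \<longleftrightarrow> 4 \<le> x (Suc i)" using validD[OF v] by auto
  show ?thesis
  proof (cases "Suc i = k")
    case True then show ?thesis using xi t by auto
  next
    case False
    then have "Suc i < k" using i by simp
    then have "x (Suc i) = 0 \<or> x (Suc i) = 2" using a by (auto simp: nn_def)
    then show ?thesis using xi t False by auto
  qed
qed

lemma nomax_ones: "valid x \<Longrightarrow> \<forall>k. \<not> nm (x k) \<Longrightarrow> x = (\<lambda>i. 1)"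
proof
  fix i assume v: "valid x" and a: "\<forall>k. \<not> nm (x k)"
  have "x i = (if 4 \<le> x (Suc i) \<and> Suc i = Suc i then 3 else 1)"
    by (rule maxpath[OF v, of "Suc i"]) (use a in auto)
  moreover have "x (Suc i) = 1 \<or> x (Suc i) = 3" using a by (auto simp: nm_def)
  ultimately show "x i = 1" by auto
qed

lemma nomin_zeros: "valid x \<Longrightarrow> \<forall>k. \<not> nn (x k) \<Longrightarrow> x = (\<lambda>i. 0)"
proof
  fix i assume v: "valid x" and a: "\<forall>k. \<not> nn (x k)"
  have "x i = (if 4 \<le> x (Suc i) \<and> Suc i = Suc i then 2 else 0)"
    by (rule minpath[OF v, of "Suc i"]) (use a in auto)
  moreover have "x (Suc i) = 0 \<or> x (Suc i) = 2" using a by (auto simp: nn_def)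
  ultimately show "x i = 0" by auto
qed

lemma valid_zeros: "valid (\<lambda>i. 0)" and valid_ones: "valid (\<lambda>i. 1)"
  by (auto simp: valid_def)

lemma valid_Vk: "valid x \<Longrightarrow> nm (x k) \<Longrightarrow> valid (Vk x k)"
proof -
  assume v: "valid x" and n: "nm (x k)"
  have xk: "x k = 0 \<or> x k = 2 \<or> x k = 4 \<or> x k = 5" using validD(1)[OF v, of k] n by (auto simp: nm_def)
  have t: "\<And>i. 2 \<le> x i \<longleftrightarrow> 4 \<le> x (Suc i)" "\<And>i. x i \<le> 5" using validD[OF v] by auto
  show ?thesis unfolding valid_def
  proof
    fix i
    show "Vk x k i \<le> 5 \<and> (2 \<le> Vk x k i \<longleftrightarrow> 4 \<le> Vk x k (Suc i))"
      using xk t[of i] t(2)[of i] t[of k]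
      by (cases "i < k"; cases "Suc i < k"; cases "i = k"; cases "Suc i = k") (auto simp: Vk_def sc_def)
  qed
qed

lemma valid_Wk: "valid x \<Longrightarrow> nn (x k) \<Longrightarrow> valid (Wk x k)"
proof -
  assume v: "valid x" and n: "nn (x k)"
  have xk: "x k = 1 \<or> x k = 3 \<or> x k = 4 \<or> x k = 5" using validD(1)[OF v, of k] n by (auto simp: nn_def)
  have t: "\<And>i. 2 \<le> x i \<longleftrightarrow> 4 \<le> x (Suc i)" "\<And>i. x i \<le> 5" using validD[OF v] by auto
  show ?thesis unfolding valid_def
  proof
    fix i
    show "Wk x k i \<le> 5 \<and> (2 \<le> Wk x k i \<longleftrightarrow> 4 \<le> Wk x k (Suc i))"
      using xk t[of i] t(2)[of i] t[of k]
      by (cases "i < k"; cases "Suc i < k"; cases "i = k"; cases "Suc i = k") (auto simp: Wk_def pc_def)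
  qed
qed

lemma valid_V: "valid x \<Longrightarrow> valid (V x)"
  by (metis V_def valid_zeros first_nm V_eq valid_Vk)

lemma valid_W: "valid x \<Longrightarrow> valid (W x)"
  by (metis W_def valid_ones first_nn W_eq valid_Wk)

lemma WV: "valid x \<Longrightarrow> W (V x) = x"
proof (cases "\<exists>k. nm (x k)")
  case True
  assume v: "valid x"
  obtain k where k: "nm (x k)" "\<forall>i<k. \<not> nm (x i)" using first_nm[OF True] by blast
  have Vx: "V x = Vk x k" by (rule V_eq[OF k])
  have xk: "x k = 0 \<or> x k = 2 \<or> x k = 4 \<or> x k = 5" using validD(1)[OF v, of k] k by (auto simp: nm_def)
  have "nn (Vk x k k)" "\<forall>i<k. \<not> nn (Vk x k i)" using xk by (auto simp: Vk_def sc_def nn_def)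
  then have "W (Vk x k) = Wk (Vk x k) k" by (rule W_eq)
  moreover have "Wk (Vk x k) k = x"
  proof
    fix i
    show "Wk (Vk x k) k i = x i"
      using maxpath[OF v k(2), of i] xk by (auto simp: Wk_def Vk_def sc_def pc_def)
  qed
  ultimately show ?thesis using Vx by simp
next
  case False
  assume v: "valid x"
  have "x = (\<lambda>i. 1)" using nomax_ones[OF v] False by auto
  moreover have "V x = (\<lambda>i. 0)" using False by (simp add: V_def)
  moreover have "W (\<lambda>i. 0) = (\<lambda>i. 1)" by (simp add: W_def nn_def)
  ultimately show ?thesis by simp
qed

lemma VW: "valid x \<Longrightarrow> V (W x) = x"
proof (cases "\<exists>k. nn (x k)")
  case True
  assume v: "valid x"
  obtain k where k: "nn (x k)" "\<forall>i<k. \<not> nn (x i)" using first_nn[OF True] by blast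
  have Wx: "W x = Wk x k" by (rule W_eq[OF k])
  have xk: "x k = 1 \<or> x k = 3 \<or> x k = 4 \<or> x k = 5" using validD(1)[OF v, of k] k by (auto simp: nn_def)
  have "nm (Wk x k k)" "\<forall>i<k. \<not> nm (Wk x k i)" using xk by (auto simp: Wk_def pc_def nm_def)
  then have "V (Wk x k) = Vk (Wk x k) k" by (rule V_eq)
  moreover have "Vk (Wk x k) k = x"
  proof
    fix i
    show "Vk (Wk x k) k i = x i"
      using minpath[OF v k(2), of i] xk by (auto simp: Wk_def Vk_def sc_def pc_def)
  qed
  ultimately show ?thesis using Wx by simp
next
  case False
  assume v: "valid x"
  have "x = (\<lambda>i. 0)" using nomin_zeros[OF v] False by auto
  moreover have "W x = (\<lambda>i. 1)" using False by (simp add: W_def)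
  moreover have "V (\<lambda>i. 1) = (\<lambda>i. 0)" by (simp add: V_def nm_def)
  ultimately show ?thesis by simp
qed


lemma R_minpath: "(\<forall>i<k. y i = 0 \<or> y i = 2) \<Longrightarrow> R y k = 0"
  by (induction k) auto

lemma R_maxpath: "valid x \<Longrightarrow> \<forall>i<k. \<not> nm (x i) \<Longrightarrow> R x k + 1 = Nv x k"
proof (induction k)
  case 0 then show ?case by (simp add: Nv_def)
next
  case (Suc k)
  have v: "x k \<le> 5" "2 \<le> x k \<longleftrightarrow> 4 \<le> x (Suc k)" using validD[OF Suc.prems(1)] by auto
  have xk: "x k = 1 \<or> x k = 3" using Suc.prems(2) by (auto simp: nm_def)
  have IH: "R x k + 1 = Nv x k" using Suc by auto
  define P where "P = (2::nat)^k"
  have P: "2^Suc k = 2*P" unfolding P_def by simp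
  from xk show ?case
  proof
    assume "x k = 1" then show ?thesis using IH v by (auto simp: Nv_def P P_def[symmetric])
  next
    assume "x k = 3" then show ?thesis using IH v by (auto simp: Nv_def P P_def[symmetric] algebra_simps)
  qed
qed

lemma Vk_R_Suc: "valid x \<Longrightarrow> nm (x k) \<Longrightarrow> \<forall>i<k. \<not> nm (x i) \<Longrightarrow> R (Vk x k) (Suc k) = R x (Suc k) + 1"
proof -
  assume v: "valid x" and k: "nm (x k)" "\<forall>i<k. \<not> nm (x i)"
  have xk: "x k = 0 \<or> x k = 2 \<or> x k = 4 \<or> x k = 5" using validD(1)[OF v, of k] k by (auto simp: nm_def)
  have m: "R x k + 1 = Nv x k" by (rule R_maxpath[OF v k(2)])
  have z: "R (Vk x k) k = 0" by (rule R_minpath) (auto simp: Vk_def)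
  have vk: "Vk x k k = sc (x k)" by (simp add: Vk_def)
  define P where "P = (2::nat)^k"
  show ?thesis using xk m z vk
    by (auto simp: Nv_def sc_def P_def[symmetric] algebra_simps)
qed

lemma Vk_after: "i > k \<Longrightarrow> Vk x k i = x i"
  by (simp add: Vk_def)

lemma Vk_R: "valid x \<Longrightarrow> nm (x k) \<Longrightarrow> \<forall>i<k. \<not> nm (x i) \<Longrightarrow> k < n \<Longrightarrow> R (Vk x k) n = R x n + 1"
proof (induction n)
  case 0 then show ?case by simp
next
  case (Suc n)
  show ?case
  proof (cases "k = n")
    case True then show ?thesis using Vk_R_Suc Suc.prems by simp
  next
    case False
    then have "k < n" using Suc by simp
    then have "R (Vk x k) n = R x n + 1" "Vk x k n = x n" using Suc by (auto simp: Vk_after)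
    then show ?thesis by (simp del: R.simps) (simp add: algebra_simps)
  qed
qed

lemma Nv_Vk: "k < n \<Longrightarrow> Nv (Vk x k) n = Nv x n"
  by (simp add: Nv_def Vk_after)

lemma R_lt_top: "valid x \<Longrightarrow> k < n \<Longrightarrow> nm (x k) \<Longrightarrow> R x n + 1 < Nv x n"
proof -
  assume v: "valid x" and kn: "k < n" and nk: "nm (x k)"
  obtain j where j: "nm (x j)" "\<forall>i<j. \<not> nm (x i)" using first_nm[of x] nk by blast
  have "j \<le> k" using j nk not_less by blast
  then have jn: "j < n" using kn by simp
  have "R (Vk x j) n < Nv (Vk x j) n" by (rule R_bound[OF valid_Vk[OF v j(1)]])
  then show ?thesis using Vk_R[OF v j jn] Nv_Vk[OF jn] by simp
qed

lemma R_inj: "valid x \<Longrightarrow> valid y \<Longrightarrow> (4 \<le> x n \<longleftrightarrow> 4 \<le> y n) \<Longrightarrow> R x n = R y n \<Longrightarrow> \<forall>i<n. x i = y i"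
proof (induction n)
  case 0 then show ?case by simp
next
  case (Suc n)
  have vx: "x n \<le> 5" "2 \<le> x n \<longleftrightarrow> 4 \<le> x (Suc n)" using validD[OF Suc.prems(1)] by auto
  have vy: "y n \<le> 5" "2 \<le> y n \<longleftrightarrow> 4 \<le> y (Suc n)" using validD[OF Suc.prems(2)] by auto
  have bx: "R x n < Nv x n" by (rule R_bound[OF Suc.prems(1)])
  have by': "R y n < Nv y n" by (rule R_bound[OF Suc.prems(2)])
  have t: "2 \<le> x n \<longleftrightarrow> 2 \<le> y n" using vx vy Suc.prems(3) by simp
  define P where "P = (2::nat)^n"
  define Q where "Q = (n+1)*P"
  have eq: "R x (Suc n) = R y (Suc n)" by fact
  have lab: "x n = y n"
    using lab_cases[OF vx(1)] lab_cases[OF vy(1)] t bx by' eq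
    by (simp add: Nv_def P_def[symmetric] Q_def[symmetric] del: R.simps) (auto simp: P_def[symmetric] Q_def[symmetric] algebra_simps)
  have "R x n = R y n" using eq lab by (auto split: if_splits)
  moreover have "4 \<le> x n \<longleftrightarrow> 4 \<le> y n" using lab by simp
  ultimately have "\<forall>i<n. x i = y i" using Suc by blast
  then show ?case using lab less_Suc_eq by auto
qed

lemma iterate_to: "valid u \<Longrightarrow> valid u' \<Longrightarrow> \<forall>i\<ge>L. u i = u' i \<Longrightarrow> R u L \<le> R u' L \<Longrightarrow> (V ^^ (R u' L - R u L)) u = u'"
proof (induction "R u' L - R u L" arbitrary: u)
  case 0
  then have "R u L = R u' L" by simp
  then have "\<forall>i<L. u i = u' i" using R_inj[OF 0(2) 0(3), of L] 0(4) by auto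
  then have "u = u'" using 0(4) by (metis not_le ext)
  then show ?case using 0 by simp
next
  case (Suc d)
  have lt: "R u L < R u' L" using Suc(2) by simp
  have "R u' L < Nv u' L" by (rule R_bound[OF Suc(4)])
  moreover have "Nv u' L = Nv u L" using Suc(5) by (simp add: Nv_def)
  ultimately have top: "R u L + 1 < Nv u L \<or> R u L + 1 = Nv u L \<and> False" using lt by simp
  have "\<exists>k<L. nm (u k)"
  proof (rule ccontr)
    assume "\<not> (\<exists>k<L. nm (u k))"
    then have "R u L + 1 = Nv u L" using R_maxpath[OF Suc(3), of L] by auto
    then show False using top by simp
  qed
  then obtain k0 where "k0 < L" "nm (u k0)" by blast
  then obtain k where k: "nm (u k)" "\<forall>i<k. \<not> nm (u i)" using first_nm[of u] by blast
  have "k \<le> k0" using k \<open>nm (u k0)\<close> not_less by blast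
  then have kL: "k < L" using \<open>k0 < L\<close> by simp
  have Vu: "V u = Vk u k" by (rule V_eq[OF k])
  have vV: "valid (V u)" by (rule valid_V[OF Suc(3)])
  have RV: "R (V u) L = R u L + 1" using Vk_R[OF Suc(3) k kL] Vu by simp
  have agree: "\<forall>i\<ge>L. V u i = u' i" using Vu Suc(5) kL by (auto simp: Vk_after)
  have "d = R u' L - R (V u) L" using Suc(2) RV by simp
  then have "(V ^^ d) (V u) = u'" using Suc(1)[of "V u"] vV Suc(4) agree RV lt by simp
  moreover have "R u' L - R u L = Suc d" using Suc(2) by simp
  ultimately show ?case by (simp add: funpow_Suc_right del: funpow.simps)
qed


definition aln :: "(nat \<Rightarrow> nat) \<Rightarrow> bool" where "aln x \<longleftrightarrow> (\<forall>i. x i \<le> 1)"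

lemma valid_funpow: "valid x \<Longrightarrow> valid ((V ^^ j) x)"
  by (induction j) (auto intro: valid_V)

lemma aln_V: "valid x \<Longrightarrow> aln x \<Longrightarrow> aln (V x)"
proof (cases "\<exists>k. nm (x k)")
  case True
  assume v: "valid x" and a: "aln x"
  obtain k where k: "nm (x k)" "\<forall>i<k. \<not> nm (x i)" using first_nm[OF True] by blast
  have "x k = 0" using k a by (auto simp: aln_def nm_def le_Suc_eq)
  then show ?thesis using V_eq[OF k] a by (auto simp: aln_def Vk_def sc_def)
next
  case False then show ?thesis by (simp add: V_def aln_def)
qed

lemma aln_Nv: "aln x \<Longrightarrow> Nv x n = 2^n"
  by (auto simp: aln_def Nv_def dest: spec[of _ n])

lemma aln_R_V: "valid x \<Longrightarrow> aln x \<Longrightarrow> R (V x) n = (R x n + 1) mod 2^n"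
proof -
  assume v: "valid x" and a: "aln x"
  have b: "R x n < 2^n" using R_bound[OF v, of n] aln_Nv[OF a] by simp
  show ?thesis
  proof (cases "\<exists>k<n. nm (x k)")
    case True
    then obtain k0 where "k0 < n" "nm (x k0)" by blast
    then obtain k where k: "nm (x k)" "\<forall>i<k. \<not> nm (x i)" using first_nm[of x] by blast
    have "k \<le> k0" using k \<open>nm (x k0)\<close> not_less by blast
    then have kn: "k < n" using \<open>k0 < n\<close> by simp
    have "R (V x) n = R x n + 1" using Vk_R[OF v k kn] V_eq[OF k] by simp
    moreover have "R x n + 1 < 2^n" using R_lt_top[OF v \<open>k0 < n\<close> \<open>nm (x k0)\<close>] aln_Nv[OF a] by simp
    ultimately show ?thesis by simp
  next
    case False
    then have top: "R x n + 1 = 2^n" using R_maxpath[OF v, of n] aln_Nv[OF a] by auto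
    have "\<forall>i<n. V x i = 0"
    proof (cases "\<exists>k. nm (x k)")
      case True
      obtain k where k: "nm (x k)" "\<forall>i<k. \<not> nm (x i)" using first_nm[OF True] by blast
      have "x k = 0" using k a by (auto simp: aln_def nm_def le_Suc_eq)
      moreover have "n \<le> k" using False k(1) not_less by blast
      ultimately show ?thesis using V_eq[OF k] by (auto simp: Vk_def sc_def)
    next
      case False then show ?thesis by (simp add: V_def)
    qed
    then have "R (V x) n = 0" using R_minpath[of n "V x"] by auto
    then show ?thesis using top by simp
  qed
qed

lemma aln_aperiodic: "valid x \<Longrightarrow> aln x \<Longrightarrow> 0 < K \<Longrightarrow> (V ^^ K) x \<noteq> x"
proof
  assume v: "valid x" and a: "aln x" and K: "0 < K" and p: "(V ^^ K) x = x"
  have inv: "\<And>j. valid ((V ^^ j) x) \<and> aln ((V ^^ j) x)"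
  proof -
    fix j show "valid ((V ^^ j) x) \<and> aln ((V ^^ j) x)"
      by (induction j) (use v a aln_V valid_V in auto)
  qed
  have Rj: "\<And>j. R ((V ^^ j) x) K = (R x K + j) mod 2^K"
  proof -
    fix j show "R ((V ^^ j) x) K = (R x K + j) mod 2^K"
    proof (induction j)
      case 0
      have "R x K < 2^K" using R_bound[OF v, of K] aln_Nv[OF a] by simp
      then show ?case by simp
    next
      case (Suc j)
      have "R ((V ^^ Suc j) x) K = (R ((V ^^ j) x) K + 1) mod 2^K"
        using aln_R_V[of "(V ^^ j) x" K] inv[of j] by simp
      also have "\<dots> = (R x K + Suc j) mod 2^K" using Suc by (simp add: mod_Suc_eq)
      finally show ?case .
    qed
  qed
  have r: "R x K < 2^K" using R_bound[OF v, of K] aln_Nv[OF a] by simp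
  have kk: "K < 2^K" by (rule less_exp)
  have "(R x K + K) mod 2^K = R x K" using Rj[of K] p by simp
  moreover have "(R x K + K) mod 2^K = (if R x K + K < 2^K then R x K + K else R x K + K - 2^K)"
  proof (cases "R x K + K < 2^K")
    case False
    then have "R x K + K - 2^K < 2^K" using r kk by linarith
    then show ?thesis using False by (simp add: le_mod_geq)
  qed simp
  ultimately show False using r kk K by (auto split: if_splits; linarith)
qed


lemma first_nm_le: "nm ((x::nat\<Rightarrow>nat) j) \<Longrightarrow> \<exists>k\<le>j. nm (x k) \<and> (\<forall>i<k. \<not> nm (x i))"
proof -
  assume "nm (x j)"
  then obtain k where k: "nm (x k)" "\<forall>i<k. \<not> nm (x i)" using first_nm[of x] by blast
  then have "k \<le> j" using \<open>nm (x j)\<close> not_less by blast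
  then show ?thesis using k by blast
qed

lemma bpt_step: "valid z \<Longrightarrow> 2 \<le> z i0 \<Longrightarrow> Suc i0 < L \<Longrightarrow>
   (\<forall>i\<ge>L. V z i = z i) \<and> R (V z) L = R z L + 1 \<and> 2 \<le> V z (Suc i0)"
proof -
  assume v: "valid z" and z: "2 \<le> z i0" and L: "Suc i0 < L"
  have z1: "4 \<le> z (Suc i0)" using validD(2)[OF v, of i0] z by simp
  then have z2: "4 \<le> z (Suc (Suc i0))" using validD(2)[OF v, of "Suc i0"] by simp
  have "nm (z (Suc i0))" using z1 by (simp add: nm_def)
  then obtain k where k: "k \<le> Suc i0" "nm (z k)" "\<forall>i<k. \<not> nm (z i)" using first_nm_le by blast
  have Vz: "V z = Vk z k" by (rule V_eq) (use k in auto)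
  have kL: "k < L" using k L by simp
  have a1: "\<forall>i\<ge>L. V z i = z i" using Vz kL by (auto simp: Vk_after)
  have a2: "R (V z) L = R z L + 1" using Vk_R[OF v k(2) k(3) kL] Vz by simp
  have "V z (Suc (Suc i0)) = z (Suc (Suc i0))" using Vz k by (simp add: Vk_after)
  then have "4 \<le> V z (Suc (Suc i0))" using z2 by simp
  then have "2 \<le> V z (Suc i0)" using validD(2)[OF valid_V[OF v], of "Suc i0"] by simp
  then show ?thesis using a1 a2 by simp
qed

lemma bpt_iter: "valid x \<Longrightarrow> 2 \<le> x m \<Longrightarrow> j \<le> K \<Longrightarrow>
   (\<forall>i\<ge>m + K + 2. (V ^^ j) x i = x i) \<and> R ((V ^^ j) x) (m + K + 2) = R x (m + K + 2) + j
   \<and> (\<exists>i\<le>m + j. 2 \<le> (V ^^ j) x i)"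
proof (induction j)
  case 0 then show ?case by auto
next
  case (Suc j)
  then obtain i0 where i0: "i0 \<le> m + j" "2 \<le> (V ^^ j) x i0"
    and a: "\<forall>i\<ge>m + K + 2. (V ^^ j) x i = x i" "R ((V ^^ j) x) (m + K + 2) = R x (m + K + 2) + j"
    by auto
  have "Suc i0 < m + K + 2" using i0 Suc by simp
  from bpt_step[OF valid_funpow[OF Suc.prems(1)] i0(2) this]
  show ?case using a i0 by (auto intro!: exI[of _ "Suc i0"])
qed

lemma aperiodic: "valid x \<Longrightarrow> 0 < K \<Longrightarrow> (V ^^ K) x \<noteq> x"
proof (cases "aln x")
  case True
  assume "valid x" "0 < K" then show ?thesis using aln_aperiodic True by blast
next
  case False
  assume v: "valid x" and K: "0 < K"
  then obtain m where m: "\<not> x m \<le> 1" using False by (auto simp: aln_def)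
  then have "2 \<le> x m" by simp
  from bpt_iter[OF v this, of K K] have "R ((V ^^ K) x) (m + K + 2) = R x (m + K + 2) + K" by simp
  then show ?thesis using K by (auto simp del: R.simps)
qed


lemma R_aln_bound: "\<forall>i<j. x i \<le> 1 \<Longrightarrow> R x j < 2^j"
proof (induction j)
  case (Suc j)
  then have "R x j < 2^j" "x j \<le> 1" by auto
  then show ?case by (auto simp: le_Suc_eq)
qed simp

lemma R_aln_mod: "\<forall>i<k. x i \<le> 1 \<Longrightarrow> j \<le> k \<Longrightarrow> R x k mod 2^j = R x j"
proof (induction k)
  case 0 then show ?case by simp
next
  case (Suc k)
  show ?case
  proof (cases "j = Suc k")
    case True then show ?thesis using R_aln_bound[OF Suc.prems(1)] by simp
  next
    case False
    then have jk: "j \<le> k" using Suc by simp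
    have IH: "R x k mod 2^j = R x j" using Suc jk by simp
    have "x k \<le> 1" using Suc by simp
    then have "R x (Suc k) = R x k \<or> R x (Suc k) = 2^k + R x k" by (auto simp: le_Suc_eq)
    moreover have "(2^k + R x k) mod 2^j = R x k mod 2^j"
    proof -
      have "(2::nat)^k = 2^j * 2^(k-j)" using jk by (simp flip: power_add)
      then show ?thesis by simp
    qed
    ultimately show ?thesis using IH by auto
  qed
qed

lemma pow_mod: "j \<le> k \<Longrightarrow> (2^k - 1) mod 2^j = (2^j - 1::nat)"
proof -
  assume jk: "j \<le> k"
  have e: "(2::nat)^k = 2^j * 2^(k-j)" using jk by (simp flip: power_add)
  have p: "(1::nat) \<le> 2^(k-j)" by simp
  have eq: "(2::nat)^k - 1 = (2^j - 1) + 2^j * (2^(k-j) - 1)"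
    using e p by (simp add: algebra_simps diff_mult_distrib2)
  have "((2::nat)^k - 1) mod 2^j = ((2^j - 1) + 2^j * (2^(k-j) - 1)) mod 2^j" by (simp only: eq)
  also have "\<dots> = (2^j - 1) mod 2^j" by (rule mod_mult_self2)
  also have "\<dots> = 2^j - 1" by simp
  finally show ?thesis .
qed

lemma wt_diff: "1 \<le> k \<Longrightarrow>
  int (wt k ((r + 1) mod 2^k)) \<ge> int (wt k r) + 1 - (if (r + 2^ab k) mod 2^k = 2^k - 1 then 2^k else 0)"
proof -
  assume k: "1 \<le> k"
  define q where "q = (r + 2^ab k) mod 2^k"
  have q: "q < 2^k" unfolding q_def by simp
  have e1: "((r + 1) mod 2^k + 2^ab k) mod 2^k = (r + 1 + 2^ab k) mod 2^k" by (rule mod_add_left_eq)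
  have e2: "((r + 2^ab k) mod 2^k + 1) mod 2^k = (r + 2^ab k + 1) mod 2^k" by (rule mod_add_left_eq)
  have e: "((r + 1) mod 2^k + 2^ab k) mod 2^k = (q + 1) mod 2^k"
    unfolding q_def e1 e2 by (simp add: ac_simps)
  show ?thesis
  proof (cases "q + 1 < 2^k")
    case True
    then show ?thesis using e q by (simp add: wt_def q_def[symmetric])
  next
    case False
    then have "q + 1 = 2^k" using q by simp
    then show ?thesis using e by (simp add: wt_def q_def[symmetric])
  qed
qed

lemma bad_prop: "\<forall>i<k. x i \<le> 1 \<Longrightarrow> 1 \<le> k \<Longrightarrow> (R x k + 2^ab k) mod 2^k = 2^k - 1 \<Longrightarrow>
   R x (ab k + 1) = 2^ab k - 1"
proof -
  assume a: "\<forall>i<k. x i \<le> 1" and k: "1 \<le> k" and b: "(R x k + 2^ab k) mod 2^k = 2^k - 1"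
  define c where "c = ab k"
  have ck: "c + 1 \<le> k" using ab_lt[OF k] by (simp add: c_def)
  have "(R x k + 2^c) mod 2^(c+1) = ((R x k + 2^c) mod 2^k) mod 2^(c+1)"
  proof -
    have "(2::nat)^(c+1) dvd 2^k" by (rule le_imp_power_dvd) (use ck in simp)
    then show ?thesis by (simp add: mod_mod_cancel)
  qed
  also have "\<dots> = 2^(c+1) - 1" using b pow_mod[OF ck] by (simp add: c_def)
  finally have h0: "(R x k + 2^c) mod 2^(c+1) = 2^(c+1) - 1" .
  have rm: "R x k mod 2^(c+1) = R x (c+1)" by (rule R_aln_mod[OF a ck])
  have "(R x (c+1) + 2^c) mod 2^(c+1) = (R x k + 2^c) mod 2^(c+1)"
    unfolding rm[symmetric] by (rule mod_add_left_eq)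
  then have h: "(R x (c+1) + 2^c) mod 2^(c+1) = 2^(c+1) - 1" using h0 by simp
  have s: "R x (c+1) < 2^(c+1)" by (rule R_aln_bound) (use a ck in auto)
  define S where "S = R x (c+1)"
  define P where "P = (2::nat)^c"
  have h': "(S + P) mod (2*P) = 2*P - 1" using h by (simp add: S_def P_def)
  have s': "S < 2*P" using s by (simp add: S_def P_def)
  have "S = P - 1"
  proof (cases "S + P < 2*P")
    case True then show ?thesis using h' by simp
  next
    case False
    then have "(S + P) mod (2*P) = S + P - 2*P" using s' by (simp add: le_mod_geq)
    then show ?thesis using h' s' False by simp
  qed
  then show ?thesis by (simp add: S_def P_def c_def)
qed

lemma prop_unique: "\<forall>i<j'+1. x i \<le> 1 \<Longrightarrow> j \<le> j' \<Longrightarrow> R x (j+1) = 2^j - 1 \<Longrightarrow> R x (j'+1) = 2^j' - 1 \<Longrightarrow> j = j'"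
proof (rule ccontr)
  assume a: "\<forall>i<j'+1. x i \<le> 1" and jj: "j \<le> j'" and p: "R x (j+1) = 2^j - 1" "R x (j'+1) = 2^j' - 1" and ne: "j \<noteq> j'"
  have "R x (j'+1) mod 2^(j+1) = R x (j+1)" by (rule R_aln_mod[OF a]) (use jj in simp)
  moreover have "(2^j' - 1) mod 2^(j+1) = (2^(j+1) - 1::nat)" by (rule pow_mod) (use jj ne in simp)
  ultimately have "2^(j+1) - 1 = (2^j - 1::nat)" using p by simp
  moreover have "(2::nat)^j < 2^(j+1)" by simp
  moreover have "(1::nat) \<le> 2^j" by simp
  ultimately show False by linarith
qed

lemma ab_bound: "ab k = j \<Longrightarrow> k < 2^(j+2)"
proof -
  assume a: "ab k = j"
  have "k < 2 * 2^floor_log k" by (rule floor_log_exp2_gt)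
  moreover have "floor_log k \<le> j + 1" using a by (simp add: ab_def)
  then have "(2::nat)^floor_log k \<le> 2^(j+1)" by (intro power_increasing) auto
  ultimately show ?thesis by simp
qed

lemma ab_small: "2 \<le> n \<Longrightarrow> 2 * 2^ab n \<le> n"
proof -
  assume n: "2 \<le> n"
  have "floor_log n \<ge> 1"
  proof (rule ccontr)
    assume "\<not> 1 \<le> floor_log n"
    then have "floor_log n = 0" by simp
    then show False using floor_log_exp2_gt[of n] n by simp
  qed
  then have "2 * 2^ab n = 2^floor_log n" by (simp add: ab_def flip: power_Suc)
  also have "\<dots> \<le> n" using floor_log_exp2_le[of n] n by simp
  finally show ?thesis .
qed


definition apr :: "(nat \<Rightarrow> nat) \<Rightarrow> nat \<Rightarrow> bool" where
  "apr x j \<longleftrightarrow> (\<forall>i\<le>j. x i \<le> 1) \<and> R x (j+1) = 2^j - 1"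
definition Bx :: "(nat \<Rightarrow> nat) \<Rightarrow> nat" where
  "Bx x = (if \<exists>j. apr x j then 2^((SOME j. apr x j) + 2) else 0)"

lemma apr_unique: "apr x j \<Longrightarrow> apr x j' \<Longrightarrow> j = j'"
proof -
  assume a: "apr x j" "apr x j'"
  show ?thesis
  proof (cases "j \<le> j'")
    case True
    then show ?thesis using prop_unique[of j' x j] a by (auto simp: apr_def)
  next
    case False
    then show ?thesis using prop_unique[of j x j'] a by (auto simp: apr_def)
  qed
qed

lemma bad_lt_Bx: "\<forall>i<k. x i \<le> 1 \<Longrightarrow> 1 \<le> k \<Longrightarrow> (R x k + 2^ab k) mod 2^k = 2^k - 1 \<Longrightarrow> k < Bx x"
proof -
  assume a: "\<forall>i<k. x i \<le> 1" and k: "1 \<le> k" and b: "(R x k + 2^ab k) mod 2^k = 2^k - 1"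
  have p: "apr x (ab k)" using bad_prop[OF a k b] ab_lt[OF k] a by (auto simp: apr_def)
  then have ex: "\<exists>j. apr x j" by blast
  have "apr x (SOME j. apr x j)" using someI_ex[OF ex] .
  then have "(SOME j. apr x j) = ab k" using apr_unique p by blast
  then show ?thesis using ab_bound[of k "ab k"] ex by (simp add: Bx_def)
qed

lemma sum_gain0: "(\<forall>k. 1 \<le> k \<longrightarrow> k \<le> n \<longrightarrow> c k \<ge> 1 - (if k < B then 2^k else 0)) \<Longrightarrow>
   (\<Sum>k\<in>{1..n}. (c k::int)) \<ge> int n - 2 * 2^(min n B)"
proof (induction n)
  case 0 then show ?case by simp
next
  case (Suc n)
  have IH: "(\<Sum>k\<in>{1..n}. c k) \<ge> int n - 2 * 2^(min n B)" using Suc by auto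
  have cs: "c (Suc n) \<ge> 1 - (if Suc n < B then 2^Suc n else 0)" using Suc.prems by auto
  have s: "(\<Sum>k\<in>{1..Suc n}. c k) = (\<Sum>k\<in>{1..n}. c k) + c (Suc n)"
    by (simp add: atLeastAtMostSuc_conv)
  show ?case
  proof (cases "Suc n < B")
    case True
    then have "min n B = n" "min (Suc n) B = Suc n" by auto
    then show ?thesis using IH cs s True by simp
  next
    case False
    have m: "min (Suc n) B = B" using False by simp
    have p: "(2::int)^(min n B) \<le> 2^B" by (intro power_increasing) auto
    have cs': "c (Suc n) \<ge> 1" using cs False by simp
    show ?thesis unfolding m s using IH cs' p by linarith
  qed
qed

lemma sum_gain: "(\<forall>k. 1 \<le> k \<longrightarrow> k \<le> n \<longrightarrow> c k \<ge> 1 - (if k < B then 2^k else 0)) \<Longrightarrow>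
   (\<Sum>k\<in>{1..n}. (c k::int)) \<ge> int n - 2 * 2^B"
proof -
  assume a: "\<forall>k. 1 \<le> k \<longrightarrow> k \<le> n \<longrightarrow> c k \<ge> 1 - (if k < B then 2^k else 0)"
  have "(2::int)^(min n B) \<le> 2^B" by (intro power_increasing) auto
  then show ?thesis using sum_gain0[OF a] by linarith
qed

lemma R_V_mod: "valid x \<Longrightarrow> nm (x k0) \<Longrightarrow> \<forall>i<k0. \<not> nm (x i) \<Longrightarrow> k0 < n \<Longrightarrow> \<forall>i<n. x i \<le> 1 \<Longrightarrow>
   k \<le> n \<Longrightarrow> R (Vk x k0) k = (R x k + 1) mod 2^k"
proof -
  assume v: "valid x" and k0: "nm (x k0)" "\<forall>i<k0. \<not> nm (x i)" and n: "k0 < n" and a: "\<forall>i<n. x i \<le> 1" and kn: "k \<le> n"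
  have x0: "x k0 = 0" using k0 a n by (auto simp: nm_def le_Suc_eq)
  have xn: "x n < 4"
  proof -
    have "x (n - 1) \<le> 1" using a n by simp
    then show ?thesis using validD(2)[OF v, of "n-1"] n by simp
  qed
  have Nk: "Nv x k = 2^k"
  proof (cases "k < n")
    case True then show ?thesis using a by (auto simp: Nv_def dest: spec[of _ k])
  next
    case False then have "k = n" using kn by simp
    then show ?thesis using xn by (simp add: Nv_def)
  qed
  show ?thesis
  proof (cases "k \<le> k0")
    case True
    have "R x k + 1 = Nv x k" by (rule R_maxpath[OF v]) (use k0 True in auto)
    moreover have "R (Vk x k0) k = 0" by (rule R_minpath) (use True x0 in \<open>auto simp: Vk_def sc_def\<close>)
    ultimately show ?thesis using Nk by simp
  next
    case False
    then have "k0 < k" by simp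
    then have "R (Vk x k0) k = R x k + 1" "R x k + 1 < Nv x k"
      using Vk_R[OF v k0] R_lt_top[OF v _ k0(1)] by auto
    then show ?thesis using Nk by simp
  qed
qed

lemma Fa_gain: "valid x \<Longrightarrow> nm (x k0) \<Longrightarrow> \<forall>i<k0. \<not> nm (x i) \<Longrightarrow> k0 < n \<Longrightarrow> \<forall>i<n. x i \<le> 1 \<Longrightarrow>
   int (Fa (Vk x k0) n) \<ge> int (Fa x n) + int n - 2 * 2^Bx x"
proof -
  assume v: "valid x" and k0: "nm (x k0)" "\<forall>i<k0. \<not> nm (x i)" and n: "k0 < n" and a: "\<forall>i<n. x i \<le> 1"
  define c where "c k = int (wt k (R (Vk x k0) k)) - int (wt k (R x k))" for k
  have ck: "\<forall>k. 1 \<le> k \<longrightarrow> k \<le> n \<longrightarrow> c k \<ge> 1 - (if k < Bx x then 2^k else 0)"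
  proof (intro allI impI)
    fix k assume k: "1 \<le> k" "k \<le> n"
    have e: "R (Vk x k0) k = (R x k + 1) mod 2^k" by (rule R_V_mod[OF v k0 n a k(2)])
    have ak: "\<forall>i<k. x i \<le> 1" using a k by auto
    have w: "int (wt k ((R x k + 1) mod 2^k)) \<ge> int (wt k (R x k)) + 1 -
        (if (R x k + 2^ab k) mod 2^k = 2^k - 1 then 2^k else 0)" by (rule wt_diff[OF k(1)])
    have pp: "(0::int) \<le> 2^k" by simp
    show "c k \<ge> 1 - (if k < Bx x then 2^k else 0)"
    proof (cases "(R x k + 2^ab k) mod 2^k = 2^k - 1")
      case True
      then have "k < Bx x" using bad_lt_Bx[OF ak k(1)] by simp
      then show ?thesis using w True unfolding c_def e by simp
    next
      case False
      then show ?thesis using w pp unfolding c_def e by (simp split: if_splits; linarith)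
    qed
  qed
  have "(\<Sum>k\<in>{1..n}. c k) \<ge> int n - 2 * 2^Bx x" by (rule sum_gain[OF ck])
  moreover have "(\<Sum>k\<in>{1..n}. c k) = int (Fa (Vk x k0) n) - int (Fa x n)"
    unfolding c_def Fa_def by (simp add: sum_subtractf)
  ultimately show ?thesis by simp
qed


lemma b_persist: "valid x \<Longrightarrow> 2 \<le> x i \<Longrightarrow> i \<le> j \<Longrightarrow> 2 \<le> x j"
proof (induction j)
  case 0 then show ?case by simp
next
  case (Suc j)
  show ?case
  proof (cases "i = Suc j")
    case True then show ?thesis using Suc by simp
  next
    case False
    then have "2 \<le> x j" using Suc by simp
    then show ?thesis using validD(2)[OF Suc.prems(1), of j] by simp
  qed
qed

lemma wt_zero: "1 \<le> k \<Longrightarrow> wt k 0 = 1 + 2^ab k"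
proof -
  assume k: "1 \<le> k"
  have "(2::nat)^ab k < 2^k" using ab_lt[OF k] by simp
  then show ?thesis by (simp add: wt_def)
qed

lemma wt_top: "1 \<le> k \<Longrightarrow> wt k (2^k - 1) = 2^ab k"
proof -
  assume k: "1 \<le> k"
  have a: "(2::nat)^ab k < 2^k" using ab_lt[OF k] by simp
  have "(2::nat)^k - 1 + 2^ab k = (2^ab k - 1) + 2^k * 1" using a by simp
  then have "((2::nat)^k - 1 + 2^ab k) mod 2^k = (2^ab k - 1) mod 2^k" by (simp only: mod_mult_self2)
  also have "\<dots> = 2^ab k - 1" using a by (intro mod_less) linarith
  finally show ?thesis using a by (simp add: wt_def)
qed

lemma Fa_zeros: "Fa (\<lambda>i. 0) n = (\<Sum>k\<in>{1..n}. 1 + 2^ab k)"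
  unfolding Fa_def using R_minpath[of _ "\<lambda>i. 0"] wt_zero by (intro sum.cong) auto

lemma Fa_ones: "Fa (\<lambda>i. 1) n = (\<Sum>k\<in>{1..n}. 2^ab k)"
proof -
  have h: "\<And>k. R (\<lambda>i. 1) k + 1 = 2^k"
    using R_maxpath[OF valid_ones] by (auto simp: Nv_def nm_def)
  have "\<And>k. R (\<lambda>i. 1) k = 2^k - 1" using h by (metis add_diff_cancel_right')
  then show ?thesis unfolding Fa_def using wt_top by (intro sum.cong) auto
qed

lemma deriv_comb: "valid x \<Longrightarrow> \<exists>N. \<forall>n\<ge>N. \<forall>y. valid y \<longrightarrow> (\<forall>i<n. y i = x i) \<longrightarrow>
    (\<exists>m. (\<forall>i<m. V y i = V x i) \<and> Phi x n + M \<le> Phi (V x) m)"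
proof (cases "\<exists>k. nm (x k)")
  case True
  assume v: "valid x"
  obtain k0 where k0: "nm (x k0)" "\<forall>i<k0. \<not> nm (x i)" using first_nm[OF True] by blast
  have Vx: "V x = Vk x k0" by (rule V_eq[OF k0])
  show ?thesis
  proof (rule exI[of _ "k0 + 2 + M + 2 * 2^Bx x"], intro allI impI)
    fix n y assume n: "k0 + 2 + M + 2 * 2^Bx x \<le> n" and vy: "valid y" and p: "\<forall>i<n. y i = x i"
    have ky: "nm (y k0)" "\<forall>i<k0. \<not> nm (y i)" using k0 p n by auto
    have Vy: "V y = Vk y k0" by (rule V_eq[OF ky])
    have agree: "\<forall>i<n. V y i = V x i" using p n by (auto simp: Vx Vy Vk_def)
    have kn: "k0 < n" using n by simp
    have n1: "k0 < n - 1" "n - 1 < n" "n \<noteq> 0" using n by auto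
    have same: "Vk x k0 (n-1) = x (n-1)" using n1 by (simp add: Vk_after)
    have RV: "R (Vk x k0) n = R x n + 1" by (rule Vk_R[OF v k0 kn])
    have "Phi x n + M \<le> Phi (V x) n"
    proof (cases "2 \<le> x (n-1)")
      case True
      then have "Phi (V x) n = 2^(n+1) + n * (R x n + 1)" "Phi x n = 2^(n+1) + n * R x n"
        using same n1 RV by (simp_all add: Phi_def Vx del: R.simps)
      then show ?thesis using n by simp
    next
      case False
      have a: "\<forall>i<n. x i \<le> 1"
      proof (intro allI impI, rule ccontr)
        fix i assume "i < n" "\<not> x i \<le> 1"
        then have "2 \<le> x (n-1)" using b_persist[OF v, of i "n-1"] by simp
        then show False using False by simp
      qed
      have e: "Phi (V x) n = Fa (Vk x k0) n" "Phi x n = Fa x n"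
        using same n1 False by (simp_all add: Phi_def Vx del: R.simps)
      have "int (Fa (Vk x k0) n) \<ge> int (Fa x n) + int n - 2 * 2^Bx x" by (rule Fa_gain[OF v k0 kn a])
      moreover have "int M + 2 * 2 ^ Bx x \<le> int n"
      proof -
        have "M + 2 * 2 ^ Bx x \<le> n" using n by simp
        then have "int (M + 2 * 2 ^ Bx x) \<le> int n" by (simp only: of_nat_le_iff)
        then show ?thesis by simp
      qed
      ultimately have "int (Fa x n + M) \<le> int (Fa (Vk x k0) n)" by simp
      then show ?thesis unfolding e by linarith
    qed
    then show "\<exists>m. (\<forall>i<m. V y i = V x i) \<and> Phi x n + M \<le> Phi (V x) m" using agree by blast
  qed
next
  case False
  assume v: "valid x"
  have x1: "x = (\<lambda>i. 1)" using nomax_ones[OF v] False by auto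
  have Vx: "V x = (\<lambda>i. 0)" using False by (simp add: V_def)
  show ?thesis
  proof (rule exI[of _ "2 * M + 4"], intro allI impI)
    fix n y assume n: "2 * M + 4 \<le> n" and vy: "valid y" and p: "\<forall>i<n. y i = x i"
    have agree: "\<forall>i<n-1. V y i = 0"
    proof (cases "\<exists>k. nm (y k)")
      case True
      obtain k where k: "nm (y k)" "\<forall>i<k. \<not> nm (y i)" using first_nm[OF True] by blast
      have "n \<le> k"
      proof (rule ccontr)
        assume "\<not> n \<le> k" then have "y k = 1" using p x1 by simp
        then show False using k by (simp add: nm_def)
      qed
      then show ?thesis using V_eq[OF k] by (auto simp: Vk_def)
    next
      case False then show ?thesis by (simp add: V_def)
    qed
    obtain n' where n': "n = Suc n'" using n by (cases n) auto
    have ph1: "Phi (V x) n' = Fa (\<lambda>i. 0) n'" using n n' by (simp add: Phi_def Vx)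
    have ph2: "Phi x n = Fa (\<lambda>i. 1) n" using n' by (simp add: Phi_def x1)
    have s1: "Fa (\<lambda>i. 0) n' = n' + (\<Sum>k\<in>{1..n'}. 2^ab k)" unfolding Fa_zeros sum.distrib by simp
    have s2: "Fa (\<lambda>i. 1) n = (\<Sum>k\<in>{1..n'}. 2^ab k) + 2^ab n" unfolding Fa_ones n' by (simp add: atLeastAtMostSuc_conv)
    have "2 * 2^ab n \<le> n" by (rule ab_small) (use n in simp)
    then have "Phi x n + M \<le> Phi (V x) n'" unfolding ph1 ph2 s1 s2 using n n' by simp
    moreover have "\<forall>i<n'. V y i = V x i" using agree n' Vx by simp
    ultimately show "\<exists>m. (\<forall>i<m. V y i = V x i) \<and> Phi x n + M \<le> Phi (V x) m" by blast
  qed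
qed


definition XX :: "(nat \<Rightarrow> nat) set" where "XX = {x. valid x}"
definition KK :: "real set" where "KK = ee ` XX"
definition ff :: "real \<Rightarrow> real" where "ff y = ee (V (inv_into XX ee y))"

lemma inj_ee: "inj_on ee XX"
  by (rule inj_onI) (auto simp: XX_def intro: ee_inj)

lemma ff_ee: "valid x \<Longrightarrow> ff (ee x) = ee (V x)"
  unfolding ff_def using inv_into_f_f[OF inj_ee, of x] by (simp add: XX_def)

lemma ff_funpow: "valid x \<Longrightarrow> (ff ^^ n) (ee x) = ee ((V ^^ n) x)"
proof (induction n)
  case (Suc n)
  then show ?case using ff_ee[OF valid_funpow[OF Suc.prems, of n]] by simp
qed simp

lemma hh_le_pow: "valid x \<Longrightarrow> hh x n \<le> (1/16)^n"
  unfolding hh_def using Phi_ge[of x n] by (intro power_decreasing) auto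

lemma hh_ge_Bd: "valid x \<Longrightarrow> (1/16)^Bd n \<le> hh x n"
  unfolding hh_def using Phi_ub[of x n] by (intro power_decreasing) auto

lemma hh_mono: "valid x \<Longrightarrow> m \<le> n \<Longrightarrow> hh x n \<le> hh x m"
  unfolding hh_def using Phi_mono'[of x m n] by (intro power_decreasing) auto

lemma small_pow: "0 < (e::real) \<Longrightarrow> \<exists>M. c * (1/16)^M < e"
proof -
  assume e: "0 < e"
  show ?thesis
  proof (cases "c \<le> 0")
    case True then show ?thesis using e by (intro exI[of _ 0]) auto
  next
    case False
    obtain M where "(1/16::real)^M < e / c" using real_arch_pow_inv[of "e/c" "1/16"] e False by auto
    then show ?thesis using False by (intro exI[of _ M]) (simp add: field_simps)
  qed
qed

lemma first_diff: "x \<noteq> (y::nat \<Rightarrow> nat) \<Longrightarrow> \<exists>n. (\<forall>i<n. y i = x i) \<and> y n \<noteq> x n"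
proof -
  assume "x \<noteq> y"
  then have "\<exists>i. y i \<noteq> x i" by auto
  then show ?thesis using exists_least_iff[of "\<lambda>i. y i \<noteq> x i"] by auto
qed

lemma ff_deriv: "valid x \<Longrightarrow> ((\<lambda>z. (ff z - ff (ee x)) / (z - ee x)) \<longlongrightarrow> 0) (at (ee x) within KK)"
proof -
  assume v: "valid x"
  show ?thesis unfolding tendsto_iff eventually_at
  proof (intro allI impI)
    fix \<epsilon> :: real assume \<epsilon>: "0 < \<epsilon>"
    obtain M where M: "8 * (1/16)^M < \<epsilon>" using small_pow[OF \<epsilon>] by blast
    obtain N where N: "\<forall>n\<ge>N. \<forall>y. valid y \<longrightarrow> (\<forall>i<n. y i = x i) \<longrightarrow>
         (\<exists>m. (\<forall>i<m. V y i = V x i) \<and> Phi x n + M \<le> Phi (V x) m)"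
      using deriv_comb[OF v, of M] by blast
    define d where "d = 2/3 * hh x N"
    have d: "0 < d" using hh_pos[of x N] by (simp add: d_def)
    show "\<exists>d>0. \<forall>z\<in>KK. z \<noteq> ee x \<and> dist z (ee x) < d \<longrightarrow>
        dist ((ff z - ff (ee x)) / (z - ee x)) 0 < \<epsilon>"
    proof (intro exI[of _ d] conjI d ballI impI)
      fix z assume z: "z \<in> KK" "z \<noteq> ee x \<and> dist z (ee x) < d"
      then obtain u where u: "valid u" "z = ee u" by (auto simp: KK_def XX_def)
      have ux: "u \<noteq> x" using z u by auto
      obtain n where n: "\<forall>i<n. u i = x i" "u n \<noteq> x n" using first_diff[of x u] ux by auto
      have low: "2/3 * hh x n \<le> \<bar>ee u - ee x\<bar>"
        using ee_lower[OF u(1) v n(1) n(2)] hh_prefix[of n u x] n(1) by simp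
      have Nn: "N \<le> n"
      proof (rule ccontr)
        assume "\<not> N \<le> n"
        then have "hh x N \<le> hh x n" using hh_mono[OF v, of n N] by simp
        then have "d \<le> \<bar>ee u - ee x\<bar>" using low by (simp add: d_def)
        then show False using z u by (simp add: dist_real_def)
      qed
      obtain m where m: "\<forall>i<m. V u i = V x i" "Phi x n + M \<le> Phi (V x) m"
        using N Nn u(1) n(1) by blast
      have up: "\<bar>ee (V u) - ee (V x)\<bar> \<le> 16/3 * hh (V x) m"
        using ee_upper[OF valid_V[OF u(1)] valid_V[OF v] m(1)] hh_prefix[of m "V u" "V x"] m(1) by simp
      have "hh (V x) m \<le> hh x n * (1/16)^M"
      proof -
        have "(1/16::real)^Phi (V x) m \<le> (1/16)^(Phi x n + M)" using m(2) by (intro power_decreasing) auto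
        then show ?thesis by (simp add: hh_def power_add)
      qed
      then have up2: "\<bar>ff z - ff (ee x)\<bar> \<le> 16/3 * (hh x n * (1/16)^M)"
        using up u ff_ee[OF u(1)] ff_ee[OF v] by simp
      have hp: "0 < hh x n" by (rule hh_pos)
      have "\<bar>ff z - ff (ee x)\<bar> / \<bar>z - ee x\<bar> \<le> (16/3 * (hh x n * (1/16)^M)) / (2/3 * hh x n)"
        using up2 low u hp by (intro frac_le) auto
      also have "\<dots> = 8 * (1/16)^M" using hp by (simp add: field_simps)
      finally show "dist ((ff z - ff (ee x)) / (z - ee x)) 0 < \<epsilon>"
        using M by (simp add: dist_real_def abs_divide)
    qed
  qed
qed


definition pclosed :: "(nat \<Rightarrow> nat) set \<Rightarrow> bool" where
  "pclosed S \<longleftrightarrow> S \<subseteq> XX \<and> (\<forall>x. (\<forall>n. \<exists>y\<in>S. \<forall>i<n. y i = x i) \<longrightarrow> x \<in> S)"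

lemma agree_of_close: "valid a \<Longrightarrow> valid b \<Longrightarrow> \<bar>ee a - ee b\<bar> < 2/3 * (1/16)^Bd n \<Longrightarrow> i \<le> n \<Longrightarrow> a i = b i"
proof (rule ccontr)
  assume va: "valid a" and vb: "valid b" and c: "\<bar>ee a - ee b\<bar> < 2/3 * (1/16)^Bd n" and i: "i \<le> n" and ne: "a i \<noteq> b i"
  then obtain d where d: "\<forall>j<d. b j = a j" "b d \<noteq> a d" using first_diff[of a b] by auto
  have dn: "d \<le> n" using d(2) ne i by (metis d(1) le_trans linorder_not_le order.strict_iff_not)
  have "2/3 * hh b d \<le> \<bar>ee b - ee a\<bar>" by (rule ee_lower[OF vb va d(1) d(2)])
  moreover have "(1/16::real)^Bd n \<le> (1/16)^Bd d" using Bd_mono[OF dn] by (intro power_decreasing) auto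
  moreover have "(1/16::real)^Bd d \<le> hh b d" by (rule hh_ge_Bd[OF vb])
  ultimately show False using c by (simp add: abs_minus_commute)
qed

lemma closed_image: "pclosed S \<Longrightarrow> closed (ee ` S)"
proof -
  assume pc: "pclosed S"
  have SX: "\<And>y. y \<in> S \<Longrightarrow> valid y" using pc by (auto simp: pclosed_def XX_def)
  show ?thesis unfolding closed_sequential_limits
  proof (intro allI impI, elim conjE)
    fix s l assume sS: "\<forall>n. s n \<in> ee ` S" and lim: "s \<longlonglongrightarrow> l"
    have "\<forall>j. \<exists>y. y \<in> S \<and> s j = ee y" using sS by blast
    then obtain u where "\<forall>j. u j \<in> S \<and> s j = ee (u j)" using choice[of "\<lambda>j y. y \<in> S \<and> s j = ee y"] by blast
    then have u: "\<And>j. u j \<in> S" "\<And>j. s j = ee (u j)" by auto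
    have vu: "\<And>j. valid (u j)" using u SX by auto
    have C: "Cauchy s" using lim by (rule LIMSEQ_imp_Cauchy)
    have "\<forall>n. \<exists>J. \<forall>a\<ge>J. \<forall>b\<ge>J. \<bar>s a - s b\<bar> < 2/3 * (1/16)^Bd n"
    proof
      fix n
      have "0 < 2/3 * (1/16::real)^Bd n" by simp
      from CauchyD[OF C this] show "\<exists>J. \<forall>a\<ge>J. \<forall>b\<ge>J. \<bar>s a - s b\<bar> < 2/3 * (1/16)^Bd n"
        by (simp only: real_norm_def)
    qed
    then obtain J where J: "\<And>n a b. J n \<le> a \<Longrightarrow> J n \<le> b \<Longrightarrow> \<bar>s a - s b\<bar> < 2/3 * (1/16)^Bd n"
      by metis
    define J' where "J' n = (\<Sum>i\<le>n. J i)" for n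
    have J'ge: "\<And>i n. i \<le> n \<Longrightarrow> J i \<le> J' n"
      unfolding J'_def by (rule member_le_sum) auto
    have J'mono: "\<And>i n. i \<le> n \<Longrightarrow> J' i \<le> J' n"
      unfolding J'_def by (rule sum_mono2) auto
    have ag: "\<And>n a b i. J n \<le> a \<Longrightarrow> J n \<le> b \<Longrightarrow> i \<le> n \<Longrightarrow> u a i = u b i"
      using agree_of_close vu J u(2) by metis
    define x where "x i = u (J' i) i" for i
    have close: "\<And>n a i. J' n \<le> a \<Longrightarrow> i < n \<Longrightarrow> u a i = x i"
    proof -
      fix n a i assume a: "J' n \<le> a" and i: "i < n"
      have "J i \<le> J' i" by (rule J'ge) simp
      moreover have "J i \<le> a" using J'ge[of i n] i a by simp
      ultimately show "u a i = x i" unfolding x_def using ag[of i a "J' i" i] by simp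
    qed
    have xS: "x \<in> S"
      using pc unfolding pclosed_def using close u(1) by blast
    have "s \<longlonglongrightarrow> ee x"
    proof (rule metric_LIMSEQ_I)
      fix r :: real assume r: "0 < r"
      obtain n where n: "16/3 * (1/16)^n < r" using small_pow[OF r] by blast
      show "\<exists>no. \<forall>a\<ge>no. dist (s a) (ee x) < r"
      proof (intro exI allI impI)
        fix a assume a: "J' n \<le> a"
        have "\<bar>ee (u a) - ee x\<bar> \<le> 16/3 * hh (u a) n"
          by (rule ee_upper[OF vu SX[OF xS]]) (use close a in auto)
        also have "\<dots> \<le> 16/3 * (1/16)^n" using hh_le_pow[OF vu, of a n] by simp
        finally show "dist (s a) (ee x) < r" using n u(2) by (simp add: dist_real_def)
      qed
    qed
    then have "l = ee x" using lim LIMSEQ_unique by blast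
    then show "l \<in> ee ` S" using xS by simp
  qed
qed

lemma pclosed_XX: "pclosed XX"
  unfolding pclosed_def
proof (intro conjI allI impI subset_refl)
  fix x assume h: "\<forall>n. \<exists>y\<in>XX. \<forall>i<n. y i = x i"
  show "x \<in> XX" unfolding XX_def valid_def
  proof (intro CollectI allI)
    fix i
    obtain y where y: "valid y" "\<forall>j<i+2. y j = x j" using h[rule_format, of "i+2"] by (auto simp: XX_def)
    then show "x i \<le> 5 \<and> (2 \<le> x i \<longleftrightarrow> 4 \<le> x (Suc i))" using validD[OF y(1), of i] by auto
  qed
qed

definition AL :: "(nat \<Rightarrow> nat) set" where "AL = {x. valid x \<and> aln x}"

lemma pclosed_AL: "pclosed AL"
  unfolding pclosed_def
proof (intro conjI allI impI)
  show "AL \<subseteq> XX" by (auto simp: AL_def XX_def)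
  fix x assume h: "\<forall>n. \<exists>y\<in>AL. \<forall>i<n. y i = x i"
  show "x \<in> AL" unfolding AL_def valid_def aln_def
  proof (intro CollectI allI conjI)
    fix i
    obtain y where y: "valid y" "aln y" "\<forall>j<i+2. y j = x j" using h[rule_format, of "i+2"] by (auto simp: AL_def)
    then have yi: "y i = x i" "y (Suc i) = x (Suc i)" by auto
    have "y i \<le> 1" using y(2) by (simp add: aln_def)
    then show "x i \<le> 5" "(2 \<le> x i \<longleftrightarrow> 4 \<le> x (Suc i))" "x i \<le> 1"
      using validD[OF y(1), of i] yi by auto
  qed
qed

lemma ee_bounded: "valid x \<Longrightarrow> \<bar>ee x\<bar> \<le> 16/3"
proof -
  assume v: "valid x"
  have "ee x = TT x 0" using ee_split[OF v, of 0] by simp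
  moreover have "hh x 0 = 1" by (simp add: hh_def Phi_def)
  ultimately show ?thesis using TT_bounds[OF v, of 0] by simp
qed

lemma compact_KK: "compact KK"
proof -
  have "closed KK" unfolding KK_def by (rule closed_image[OF pclosed_XX])
  moreover have "bounded KK" unfolding bounded_iff KK_def XX_def using ee_bounded by (intro exI[of _ "16/3"]) auto
  ultimately show ?thesis by (simp add: compact_eq_bounded_closed)
qed


lemma ff_image: "ff ` KK = KK"
proof
  show "ff ` KK \<subseteq> KK" using ff_ee valid_V by (auto simp: KK_def XX_def)
  show "KK \<subseteq> ff ` KK"
  proof
    fix z assume "z \<in> KK"
    then obtain y where y: "valid y" "z = ee y" by (auto simp: KK_def XX_def)
    have "z = ff (ee (W y))" using ff_ee[OF valid_W[OF y(1)]] VW[OF y(1)] y by simp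
    moreover have "ee (W y) \<in> KK" using valid_W[OF y(1)] by (auto simp: KK_def XX_def)
    ultimately show "z \<in> ff ` KK" by blast
  qed
qed

lemma ff_inj: "inj_on ff KK"
proof (rule inj_onI)
  fix a b assume "a \<in> KK" "b \<in> KK" "ff a = ff b"
  then obtain x y where xy: "valid x" "valid y" "a = ee x" "b = ee y" "ee (V x) = ee (V y)"
    by (auto simp: KK_def XX_def ff_ee)
  then have "V x = V y" using ee_inj valid_V by blast
  then have "x = y" using WV xy by metis
  then show "a = b" using xy by simp
qed

lemma ff_hasderiv: "z \<in> KK \<Longrightarrow> (ff has_field_derivative 0) (at z within KK)"
  using ff_deriv by (auto simp: KK_def XX_def has_field_derivative_iff)

lemma ff_cont: "continuous_on KK ff"
  unfolding continuous_on_eq_continuous_within using ff_hasderiv DERIV_continuous by blast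

lemma ff_homeo: "\<exists>g. homeomorphism KK KK ff g"
  by (rule homeomorphism_compact[OF compact_KK ff_cont ff_image ff_inj])

lemma KK_totdisc: "totally_disconnected KK"
  unfolding totally_disconnected_def
proof (intro allI impI)
  fix C assume C: "C \<subseteq> KK \<and> connected C"
  show "\<exists>a. C \<subseteq> {a}"
  proof (rule ccontr)
    assume "\<not> (\<exists>a. C \<subseteq> {a})"
    then obtain a b where ab: "a \<in> C" "b \<in> C" "a \<noteq> b" by blast
    define p where "p = min a b"
    define q where "q = max a b"
    have pq: "p \<in> C" "q \<in> C" "p < q" using ab by (auto simp: p_def q_def min_def max_def)
    have sub: "{p..q} \<subseteq> KK" using connected_contains_Icc[of C p q] C pq by blast
    have "\<exists>c. \<forall>z\<in>{p..q}. ff z = c"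
    proof (rule has_field_derivative_zero_constant)
      show "convex {p..q}" by simp
      fix z assume "z \<in> {p..q}"
      then show "(ff has_field_derivative 0) (at z within {p..q})"
        using ff_hasderiv[of z] sub DERIV_subset by blast
    qed
    then have "ff p = ff q" using pq by auto
    moreover have "p \<in> KK" "q \<in> KK" using pq C by auto
    ultimately have "p = q" using inj_onD[OF ff_inj] by blast
    then show False using pq by simp
  qed
qed

lemma KK_perfect: "z \<in> KK \<Longrightarrow> z islimpt KK"
proof -
  assume "z \<in> KK"
  then obtain x where v: "valid x" and z: "z = ee x" by (auto simp: KK_def XX_def)
  show ?thesis unfolding islimpt_approachable
  proof (intro allI impI)
    fix e :: real assume e: "0 < e"
    obtain n where n: "16/3 * (1/16)^n < e" using small_pow[OF e] by blast
    define y where "y i = (if i < n then x i else if i = n then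
        (if 4 \<le> x n then (if x n = 4 then 5 else 4) else (if x n = 0 then 1 else 0))
        else (if 4 \<le> x n then 4 else 0))" for i
    have vy: "valid y" unfolding valid_def
    proof
      fix i
      have t: "2 \<le> x i \<longleftrightarrow> 4 \<le> x (Suc i)" using validD[OF v] by auto
      show "y i \<le> 5 \<and> (2 \<le> y i \<longleftrightarrow> 4 \<le> y (Suc i))"
        using t validD(1)[OF v, of i] by (cases "Suc i < n"; cases "Suc i = n"; cases "i = n") (auto simp: y_def)
    qed
    have ne: "y \<noteq> x" by (auto simp: y_def fun_eq_iff intro!: exI[of _ n])
    have p: "\<forall>i<n. x i = y i" by (simp add: y_def)
    have "\<bar>ee x - ee y\<bar> \<le> 16/3 * hh x n" by (rule ee_upper[OF v vy p])
    also have "\<dots> \<le> 16/3 * (1/16)^n" using hh_le_pow[OF v, of n] by simp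
    finally have "dist (ee y) (ee x) < e" using n by (simp add: dist_real_def abs_minus_commute)
    moreover have "ee y \<noteq> ee x" using ee_inj[OF vy v] ne by auto
    moreover have "ee y \<in> KK" using vy by (auto simp: KK_def XX_def)
    ultimately show "\<exists>x'\<in>KK. x' \<noteq> z \<and> dist x' z < e" using z by blast
  qed
qed

lemma KK_cantor: "cantor_set KK"
  unfolding cantor_set_def
  using compact_KK KK_totdisc KK_perfect valid_zeros by (auto simp: KK_def XX_def)


lemma near_point: "valid x \<Longrightarrow> 0 < e \<Longrightarrow> \<exists>n. \<forall>y. valid y \<longrightarrow> (\<forall>i<n. y i = x i) \<longrightarrow> dist (ee y) (ee x) < e"
proof -
  assume v: "valid x" and e: "0 < e"
  obtain n where n: "16/3 * (1/16)^n < e" using small_pow[OF e] by blast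
  show ?thesis
  proof (intro exI allI impI)
    fix y assume vy: "valid y" and p: "\<forall>i<n. y i = x i"
    have "\<bar>ee x - ee y\<bar> \<le> 16/3 * hh x n" by (rule ee_upper[OF v vy]) (use p in auto)
    also have "\<dots> \<le> 16/3 * (1/16)^n" using hh_le_pow[OF v, of n] by simp
    finally show "dist (ee y) (ee x) < e" using n by (simp add: dist_real_def abs_minus_commute)
  qed
qed

lemma near_mono: "(\<forall>y. valid y \<longrightarrow> (\<forall>i<n. y i = x i) \<longrightarrow> P y) \<Longrightarrow> n \<le> n' \<Longrightarrow>
   (\<forall>y. valid y \<longrightarrow> (\<forall>i<n'. y i = x i) \<longrightarrow> P y)"
  by auto

lemma ff_transitive: "dyn_transitive KK ff"
  unfolding dyn_transitive_def
proof (intro allI impI, elim conjE)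
  fix U V' assume U: "openin (top_of_set KK) U" "U \<noteq> {}" and V': "openin (top_of_set KK) V'" "V' \<noteq> {}"
  obtain a where a: "a \<in> U" using U by blast
  obtain b where b: "b \<in> V'" using V' by blast
  obtain ea where ea: "0 < ea" "\<forall>z\<in>KK. dist z a < ea \<longrightarrow> z \<in> U"
    using U(1) a unfolding openin_euclidean_subtopology_iff by blast
  obtain eb where eb: "0 < eb" "\<forall>z\<in>KK. dist z b < eb \<longrightarrow> z \<in> V'"
    using V'(1) b unfolding openin_euclidean_subtopology_iff by blast
  have aK: "a \<in> KK" using U(1) a by (meson openin_imp_subset subsetD)
  have bK: "b \<in> KK" using V'(1) b by (meson openin_imp_subset subsetD)
  obtain x where vx: "valid x" and ax: "a = ee x" using aK by (auto simp: KK_def XX_def)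
  obtain x' where vx': "valid x'" and bx: "b = ee x'" using bK by (auto simp: KK_def XX_def)
  obtain n1 where n1: "\<forall>y. valid y \<longrightarrow> (\<forall>i<n1. y i = x i) \<longrightarrow> dist (ee y) (ee x) < ea"
    using near_point[OF vx ea(1)] by blast
  obtain n2 where n2: "\<forall>y. valid y \<longrightarrow> (\<forall>i<n2. y i = x' i) \<longrightarrow> dist (ee y) (ee x') < eb"
    using near_point[OF vx' eb(1)] by blast
  define n where "n = max n1 n2"
  define u where "u i = (if i < n then x i else if i = n then (if 4 \<le> x n then 4 else 2) else 4)" for i
  define u' where "u' i = (if i < n then x' i else if i = n then (if 4 \<le> x' n then 5 else 3) else 4)" for i
  have vu: "valid u" unfolding valid_def
  proof
    fix i
    have t: "2 \<le> x i \<longleftrightarrow> 4 \<le> x (Suc i)" using validD[OF vx] by auto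
    show "u i \<le> 5 \<and> (2 \<le> u i \<longleftrightarrow> 4 \<le> u (Suc i))"
      using t validD(1)[OF vx, of i] by (cases "Suc i < n"; cases "Suc i = n"; cases "i = n") (auto simp: u_def)
  qed
  have vu': "valid u'" unfolding valid_def
  proof
    fix i
    have t: "2 \<le> x' i \<longleftrightarrow> 4 \<le> x' (Suc i)" using validD[OF vx'] by auto
    show "u' i \<le> 5 \<and> (2 \<le> u' i \<longleftrightarrow> 4 \<le> u' (Suc i))"
      using t validD(1)[OF vx', of i] by (cases "Suc i < n"; cases "Suc i = n"; cases "i = n") (auto simp: u'_def)
  qed
  have uU: "ee u \<in> U"
  proof -
    have "\<forall>i<n1. u i = x i" by (auto simp: u_def n_def)
    then have "dist (ee u) (ee x) < ea" using n1 vu by blast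
    then show ?thesis using ea(2) vu ax by (auto simp: KK_def XX_def)
  qed
  have uV: "ee u' \<in> V'"
  proof -
    have "\<forall>i<n2. u' i = x' i" by (auto simp: u'_def n_def)
    then have "dist (ee u') (ee x') < eb" using n2 vu' by blast
    then show ?thesis using eb(2) vu' bx by (auto simp: KK_def XX_def)
  qed
  have agree: "\<forall>i\<ge>Suc n. u i = u' i" by (simp add: u_def u'_def)
  have Ru: "R u n = R x n" "R u' n = R x' n" by (auto intro: R_prefix simp: u_def u'_def)
  have bx1: "R x n < Nv x n" by (rule R_bound[OF vx])
  have bx2: "R x' n < Nv x' n" by (rule R_bound[OF vx'])
  define P where "P = (2::nat)^n"
  have lt: "R u (Suc n) < R u' (Suc n)"
  proof -
    have "R u (Suc n) < P + (n+1)*P"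
      using Ru bx1 by (auto simp: u_def Nv_def P_def[symmetric] simp del: R.simps) (auto simp: u_def P_def[symmetric])
    moreover have "P + (n+1)*P \<le> R u' (Suc n)"
      by (auto simp: u'_def P_def[symmetric])
    ultimately show ?thesis by simp
  qed
  define d where "d = R u' (Suc n) - R u (Suc n)"
  have d: "1 \<le> d" using lt by (simp add: d_def)
  have "(V ^^ d) u = u'" unfolding d_def by (rule iterate_to[OF vu vu' agree]) (use lt in simp)
  then have "(ff ^^ d) (ee u) = ee u'" using ff_funpow[OF vu] by simp
  then have "ee u' \<in> (ff ^^ d) ` U \<inter> V'" using uU uV by (metis IntI image_eqI)
  then show "\<exists>n\<ge>1. (ff ^^ n) ` U \<inter> V' \<noteq> {}" using d by blast
qed


lemma aln_W: "valid y \<Longrightarrow> aln y \<Longrightarrow> aln (W y)"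
proof (cases "\<exists>k. nn (y k)")
  case True
  assume v: "valid y" and a: "aln y"
  obtain k where k: "nn (y k)" "\<forall>i<k. \<not> nn (y i)" using first_nn[OF True] by blast
  have "y k \<le> 1" using a by (simp add: aln_def)
  then have "y k = 1" using k(1) by (simp add: nn_def)
  then show ?thesis using W_eq[OF k] a by (auto simp: aln_def Wk_def pc_def)
next
  case False then show ?thesis by (simp add: W_def aln_def)
qed

lemma ff_not_minimal: "\<not> dyn_minimal KK ff"
proof -
  have sub: "ee ` AL \<subseteq> KK" unfolding AL_def KK_def XX_def by auto
  have "(\<lambda>i. 0) \<in> AL" using valid_zeros by (simp add: AL_def aln_def)
  then have ne: "ee ` AL \<noteq> {}" by blast
  have v4: "valid (\<lambda>i. 4)" by (simp add: valid_def)
  have inK: "ee (\<lambda>i. 4) \<in> KK" unfolding KK_def XX_def using v4 by simp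
  have notA: "ee (\<lambda>i. 4) \<notin> ee ` AL"
  proof
    assume "ee (\<lambda>i. 4) \<in> ee ` AL"
    then obtain y where y: "y \<in> AL" "ee (\<lambda>i. 4) = ee y" by blast
    have vy: "valid y" "aln y" using y(1) unfolding AL_def by auto
    have "(\<lambda>i. 4) = y" by (rule ee_inj[OF v4 vy(1) y(2)])
    then have "aln (\<lambda>i::nat. 4::nat)" using vy(2) by simp
    then show False unfolding aln_def by simp
  qed
  have ps: "ee ` AL \<subset> KK"
  proof (rule psubsetI[OF sub])
    show "ee ` AL \<noteq> KK" using inK notA by metis
  qed
  have cl: "closedin (top_of_set KK) (ee ` AL)" by (rule closed_subset[OF sub closed_image[OF pclosed_AL]])
  have inv: "ff ` ee ` AL = ee ` AL"
  proof
    show "ff ` ee ` AL \<subseteq> ee ` AL"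
    proof
      fix z assume "z \<in> ff ` ee ` AL"
      then obtain y where y: "y \<in> AL" "z = ff (ee y)" by blast
      then have vy: "valid y" "aln y" unfolding AL_def by auto
      have "z = ee (V y)" using y(2) ff_ee[OF vy(1)] by simp
      moreover have "V y \<in> AL" using valid_V[OF vy(1)] aln_V[OF vy] unfolding AL_def by simp
      ultimately show "z \<in> ee ` AL" by blast
    qed
    show "ee ` AL \<subseteq> ff ` ee ` AL"
    proof
      fix z assume "z \<in> ee ` AL"
      then obtain y where y0: "y \<in> AL" "z = ee y" by blast
      then have y: "valid y" "aln y" unfolding AL_def by auto
      have "z = ff (ee (W y))" using ff_ee[OF valid_W[OF y(1)]] VW[OF y(1)] y0(2) by simp
      moreover have "W y \<in> AL" using valid_W[OF y(1)] aln_W[OF y(1,2)] unfolding AL_def by simp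
      ultimately show "z \<in> ff ` ee ` AL" by blast
    qed
  qed
  have "\<exists>A. A \<noteq> {} \<and> A \<subset> KK \<and> closedin (top_of_set KK) A \<and> ff ` A = A"
    by (rule exI[of _ "ee ` AL"]) (intro conjI ne ps cl inv)
  then show ?thesis unfolding dyn_minimal_def by simp
qed

lemma ff_no_periodic: "\<not> periodic_point KK ff z"
proof
  assume "periodic_point KK ff z"
  then obtain n where z: "z \<in> KK" "1 \<le> n" "(ff ^^ n) z = z" by (auto simp: periodic_point_def)
  then obtain x where v: "valid x" and zx: "z = ee x" by (auto simp: KK_def XX_def)
  have "ee ((V ^^ n) x) = ee x" using z zx ff_funpow[OF v] by simp
  then have "(V ^^ n) x = x" using ee_inj[OF valid_funpow[OF v] v] by simp
  then show False using aperiodic[OF v] z by simp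
qed

theorem theoremC:
  shows "\<exists>(X::real set) T. cantor_set X \<and> is_homeo_of X T \<and> dyn_transitive X T
     \<and> \<not> dyn_minimal X T \<and> (\<forall>x. \<not> periodic_point X T x)
     \<and> (\<exists>(K::real set) f. cantor_set K \<and> is_homeo_of K f
          \<and> (\<forall>x\<in>K. rel_deriv_is f K x 0) \<and> conjugate X T K f)"
proof (rule exI[of _ KK], rule exI[of _ ff], intro conjI)
  show "cantor_set KK" by (rule KK_cantor)
  show "is_homeo_of KK ff" unfolding is_homeo_of_def by (rule ff_homeo)
  show "dyn_transitive KK ff" by (rule ff_transitive)
  show "\<not> dyn_minimal KK ff" by (rule ff_not_minimal)
  show "\<forall>x. \<not> periodic_point KK ff x" using ff_no_periodic by blast
  show "\<exists>(K::real set) f. cantor_set K \<and> is_homeo_of K f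
          \<and> (\<forall>x\<in>K. rel_deriv_is f K x 0) \<and> conjugate KK ff K f"
  proof (rule exI[of _ KK], rule exI[of _ ff], intro conjI)
  show "cantor_set KK" by (rule KK_cantor)
  show "is_homeo_of KK ff" unfolding is_homeo_of_def by (rule ff_homeo)
  show "\<forall>x\<in>KK. rel_deriv_is ff KK x 0"
    unfolding rel_deriv_is_def using ff_deriv by (auto simp: KK_def XX_def)
  show "conjugate KK ff KK ff" unfolding conjugate_def
    using homeomorphism_ident[of KK] by auto
  qed
qed

end
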